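(* For all $s\in\mathcal{Q}$, the function $F_s$ is supported on a subset of $J_s$, and $F_s(c)=1$ for every extremal point $c$ of $J_s$.
   Context: $\mathcal{Q}=\mathbb{Q}^{\geq0}\cup\{\infty\}$; each $\sigma\in\mathcal{Q}$ is written uniquely $\sigma=q/p$ with $p,q\in\mathbb{N}$ coprime ($\infty=1/0$). For such $\sigma$: $J_\sigma=\{(\alpha,\beta)\in\mathbb{Z}^2:\ \alpha\equiv q,\ \beta\equiv p\pmod2;\ \alpha\geq-q;\ \beta\geq-p;\ \alpha+\beta\leq p+q-2;\ p\alpha+q\beta\geq0\}$, $P^\sigma_i=(q+2i,-p)$, $Q^\sigma_j=(-q,p+2j)$. The extremal points of $J_\sigma$ are $P^\sigma_0,P^\sigma_{p-1},Q^\sigma_0,Q^\sigma_{q-1}$ if $\sigma\notin\{0,\infty\}$, and the unique point of $J_\sigma$ if $\sigma\in\{0,\infty\}$. Parents: for $\sigma\in\mathcal{Q}\smallsetminus\{0,1,\infty\}$, let $L_\sigma$ be the hyperbolic geodesic in the upper half-plane from $\sigma$ to $\sqrt{-1}$; the parents of $\sigma$ are the endpoints of the first edge of the Farey triangulation (ideal triangles with vertices $\frac{q_0}{p_0},\frac{q_0+q_1}{p_0+p_1},\frac{q_1}{p_1}$, $q_0p_1-q_1p_0=\pm1$) crossed by $L_\sigma$, closest to $\sigma$; the parents of $1$ are $0$ and $\infty$. For $\sigma\notin\{0,1,\infty\}$ the parents are labelled $\sigma_0,\sigma_1$ so that the parents of $\sigma_1$ are $\sigma_0$ and another point $\sigma'\in\mathcal{Q}$.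 Let $\mathcal{F}$ be the set of finitely supported functions $\mathbb{Z}^2\to\mathbb{Z}$, with convolution $F*G(u)=\sum_{x+y=u}F(x)G(y)$; $1\!\!1_U$ is the indicator function of $U$; $\Lambda=\{(0,0),(0,2),(2,0)\}$. Define $F_\sigma=1\!\!1_{J_\sigma}$ for $\sigma\in\{0,1,\infty\}$, and recursively $F_\sigma=F_{\sigma_0}*F_{\sigma_1}*1\!\!1_\Lambda-F_{\sigma'}$ for $\sigma\in\mathcal{Q}\smallsetminus\{0,1,\infty\}$. *)

theory Defs
  imports Complex_Main "HOL-Library.Product_Plus"
begin

text \<open>An element sigma = q/p of Q is represented by the pair (q,p) of coprime
  naturals; infinity = 1/0 is (1,0), 0 = 0/1 is (0,1), 1 is (1,1).\<close>

definition inQ :: "nat \<times> nat \<Rightarrow> bool" where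
  "inQ s \<longleftrightarrow> coprime (fst s) (snd s)"

definition Jset :: "nat \<times> nat \<Rightarrow> (int \<times> int) set" where
  "Jset s = (let q = int (fst s); p = int (snd s) in
     {(\<alpha>, \<beta>). \<alpha> mod 2 = q mod 2 \<and> \<beta> mod 2 = p mod 2 \<and> \<alpha> \<ge> -q \<and> \<beta> \<ge> -p
        \<and> \<alpha> + \<beta> \<le> p + q - 2 \<and> p * \<alpha> + q * \<beta> \<ge> 0})"

definition Ppt :: "nat \<times> nat \<Rightarrow> int \<Rightarrow> int \<times> int" where
  "Ppt s i = (int (fst s) + 2 * i, - int (snd s))"

definition Qpt :: "nat \<times> nat \<Rightarrow> int \<Rightarrow> int \<times> int" where
  "Qpt s j = (- int (fst s), int (snd s) + 2 * j)"

definition extremal :: "nat \<times> nat \<Rightarrow> (int \<times> int) set" where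
  "extremal s = (if s = (0,1) \<or> s = (1,0) then Jset s
     else {Ppt s 0, Ppt s (int (snd s) - 1), Qpt s 0, Qpt s (int (fst s) - 1)})"

text \<open>A vertex of the Farey triangulation is an integer pair (a,b) standing for the
  point a/b of the real line (infinity if b = 0).  The edges are the sides of the
  ideal triangles with vertices q0/p0, (q0+q1)/(p0+p1), q1/p1, q0 p1 - q1 p0 = +-1.\<close>

definition fdet :: "int \<times> int \<Rightarrow> int \<times> int \<Rightarrow> int" where
  "fdet v w = fst v * snd w - fst w * snd v"

definition farey_edge :: "int \<times> int \<Rightarrow> int \<times> int \<Rightarrow> bool" where
  "farey_edge v w \<longleftrightarrow> (\<exists>v0 v1. (fdet v0 v1 = 1 \<or> fdet v0 v1 = -1) \<and>
      ((v, w) = (v0, v1) \<or> (v, w) = (v0, v0 + v1) \<or> (v, w) = (v1, v0 + v1)))"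

definition geod_edge :: "int \<times> int \<Rightarrow> int \<times> int \<Rightarrow> complex set" where
  "geod_edge v w = {z. Im z > 0 \<and>
     (if snd v = 0 then Re z = of_int (fst w) / of_int (snd w)
      else if snd w = 0 then Re z = of_int (fst v) / of_int (snd v)
      else cmod (z - complex_of_real ((of_int (fst v) / of_int (snd v)
                         + of_int (fst w) / of_int (snd w)) / 2))
           = \<bar>of_int (fst v) / of_int (snd v) - of_int (fst w) / of_int (snd w)\<bar> / 2)}"

definition sval :: "nat \<times> nat \<Rightarrow> real" where
  "sval s = real (fst s) / real (snd s)"

text \<open>For a finite sigma > 0, the geodesic L_sigma from sigma to i: the arc of
  the circle centred on the real axis through sigma and i (orthogonal to the real
  axis), namely the part of its upper half with nonnegative real part.\<close>

definition Lgeod :: "nat \<times> nat \<Rightarrow> complex set" where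
  "Lgeod s = (let x0 = ((sval s)\<^sup>2 - 1) / (2 * sval s) in
     {z. Im z > 0 \<and> Re z \<ge> 0 \<and> cmod (z - complex_of_real x0) = cmod (\<i> - complex_of_real x0)})"

definition crosses :: "nat \<times> nat \<Rightarrow> int \<times> int \<Rightarrow> int \<times> int \<Rightarrow> complex \<Rightarrow> bool" where
  "crosses s v w z \<longleftrightarrow> farey_edge v w \<and> z \<in> geod_edge v w \<inter> Lgeod s"

definition first_edge :: "nat \<times> nat \<Rightarrow> int \<times> int \<Rightarrow> int \<times> int \<Rightarrow> bool" where
  "first_edge s v w \<longleftrightarrow> (\<exists>z. crosses s v w z \<and>
     (\<forall>v' w' z'. crosses s v' w' z' \<longrightarrow>
        cmod (z - complex_of_real (sval s)) \<le> cmod (z' - complex_of_real (sval s))))"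

definition same_pt :: "nat \<times> nat \<Rightarrow> int \<times> int \<Rightarrow> bool" where
  "same_pt s v \<longleftrightarrow> int (fst s) * snd v = int (snd s) * fst v"

definition parents :: "nat \<times> nat \<Rightarrow> (nat \<times> nat) set" where
  "parents s = (if s = (1,1) then {(0,1), (1,0)}
     else if s = (0,1) \<or> s = (1,0) then {}
     else {t. inQ t \<and> (\<exists>v w. first_edge s v w \<and> (same_pt t v \<or> same_pt t w))})"

definition labels :: "nat \<times> nat \<Rightarrow> (nat \<times> nat) \<times> (nat \<times> nat) \<times> (nat \<times> nat)" where
  "labels s = (SOME (s0, s1, s'). s0 \<noteq> s1 \<and> parents s = {s0, s1} \<and>
                  inQ s' \<and> s' \<noteq> s0 \<and> parents s1 = {s0, s'})"

definition conv :: "(int \<times> int \<Rightarrow> int) \<Rightarrow> (int \<times> int \<Rightarrow> int) \<Rightarrow> int \<times> int \<Rightarrow> int" where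
  "conv F G u = (\<Sum>x\<in>{x. F x \<noteq> 0}. F x * G (u - x))"

definition ind :: "(int \<times> int) set \<Rightarrow> int \<times> int \<Rightarrow> int" where
  "ind U x = (if x \<in> U then 1 else 0)"

definition Lam :: "(int \<times> int) set" where
  "Lam = {(0,0), (0,2), (2,0)}"

definition qsize :: "nat \<times> nat \<Rightarrow> nat" where
  "qsize s = fst s + snd s"

text \<open>The recursion; the guard (parents strictly smaller in q+p) always holds
  for sigma in Q (it only makes the definition total/terminating).\<close>

function Ffun :: "nat \<times> nat \<Rightarrow> int \<times> int \<Rightarrow> int" where
  "Ffun s = (if s = (0,1) \<or> s = (1,1) \<or> s = (1,0) then ind (Jset s)
     else (let s0 = fst (labels s); s1 = fst (snd (labels s)); s' = snd (snd (labels s)) in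
       if qsize s0 < qsize s \<and> qsize s1 < qsize s \<and> qsize s' < qsize s
       then (\<lambda>u. conv (conv (Ffun s0) (Ffun s1)) (ind Lam) u - Ffun s' u)
       else (\<lambda>_. 0)))"
  by auto
termination
  by (relation "measure qsize") (auto simp: Let_def)

end

theory Submission
  imports Defs
begin

lemma opp_sign_gap:
  fixes X Y :: int
  assumes "X * Y < 0"
  shows "X - Y \<ge> 2 \<or> X - Y \<le> -2"
proof -
  have "(X > 0 \<and> Y < 0) \<or> (X < 0 \<and> Y > 0)" using assms by (auto simp: mult_less_0_iff)
  then show ?thesis by auto
qed

lemma sum_ge_of_prod:
  fixes u v k :: int
  assumes "u \<ge> 0" "v \<ge> 0" "u * v = k * (k + 1)" "k \<ge> 1"
  shows "u + v \<ge> 2 * k + 1"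
proof (rule ccontr)
  assume "\<not> ?thesis"
  then have h: "u + v \<le> 2 * k" by simp
  have A: "(u + v)^2 \<le> (2*k)^2" using h assms(1,2) by (intro power_mono) auto
  have E: "(u + v)^2 = (u - v)^2 + 4 * (u * v)" by (simp add: power2_eq_square algebra_simps)
  have "(u - v)^2 \<ge> 0" by simp
  then have "4 * (u * v) \<le> (2*k)^2" using A E by linarith
  then have "4 * (k * (k+1)) \<le> 4 * k^2" using assms(3) by (simp add: power_mult_distrib)
  then show False using assms(4) by (simp add: power2_eq_square algebra_simps)
qed

lemma sign_pos_case:
  fixes \<alpha> \<beta> \<gamma> \<delta> :: int
  assumes det: "\<alpha>*\<delta> - \<beta>*\<gamma> = 1 \<or> \<alpha>*\<delta> - \<beta>*\<gamma> = -1"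
    and ab: "\<alpha>*\<beta> \<ge> 0" and gd: "\<gamma>*\<delta> \<ge> 0" and nz: "\<alpha>*\<beta> \<noteq> 0 \<or> \<gamma>*\<delta> \<noteq> 0"
  shows "(\<gamma>-\<alpha>)*(\<delta>-\<beta>) \<ge> 0"
proof -
  define X where "X = \<alpha>*\<delta>"
  define Y where "Y = \<beta>*\<gamma>"
  have XY: "X * Y = (\<alpha>*\<beta>) * (\<gamma>*\<delta>)" by (simp add: X_def Y_def algebra_simps)
  have XY0: "X * Y \<ge> 0" using XY ab gd by simp
  have e: "(\<gamma>-\<alpha>)*(\<delta>-\<beta>) = \<alpha>*\<beta> + \<gamma>*\<delta> - (X + Y)" by (simp add: X_def Y_def algebra_simps)
  have d: "X - Y = 1 \<or> X - Y = -1" using det by (simp add: X_def Y_def)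
  show ?thesis
  proof (cases "X + Y < 0")
    case True then show ?thesis using e ab gd by linarith
  next
    case False
    then obtain k where k: "k \<ge> 0" "X * Y = k * (k+1)" "X + Y = 2*k+1"
    proof (cases "X - Y = 1")
      case True
      then show ?thesis using that[of Y] False by (simp add: algebra_simps) 
    next
      case False': False
      then have "Y = X + 1" using d by simp
      then show ?thesis using that[of X] False by (simp add: algebra_simps)
    qed
    show ?thesis
    proof (cases "k = 0")
      case True
      have "\<alpha>*\<beta> + \<gamma>*\<delta> \<noteq> 0" using ab gd nz by linarith
      then show ?thesis using e k ab gd True by simp
    next
      case False
      then have "\<alpha>*\<beta> + \<gamma>*\<delta> \<ge> 2*k+1"
        using sum_ge_of_prod[of "\<alpha>*\<beta>" "\<gamma>*\<delta>" k] ab gd k XY by simp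
      then show ?thesis using e k by simp
    qed
  qed
qed

lemma int_sign:
  fixes \<alpha> \<beta> \<gamma> \<delta> :: int
  assumes det: "\<alpha>*\<delta> - \<beta>*\<gamma> = 1 \<or> \<alpha>*\<delta> - \<beta>*\<gamma> = -1"
  shows "(\<alpha>*\<beta> = 0 \<and> \<gamma>*\<delta> = 0) \<or>
    (\<alpha>*\<beta> \<ge> 0 \<and> \<gamma>*\<delta> \<ge> 0 \<and> (\<alpha>*\<beta> > 0 \<or> \<gamma>*\<delta> > 0) \<and> (\<gamma>-\<alpha>)*(\<delta>-\<beta>) \<ge> 0) \<or>
    (\<alpha>*\<beta> \<le> 0 \<and> \<gamma>*\<delta> \<le> 0 \<and> (\<alpha>*\<beta> < 0 \<or> \<gamma>*\<delta> < 0) \<and> (\<gamma>-\<alpha>)*(\<delta>-\<beta>) \<le> 0)"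
proof -
  have nopp: "\<not> ((\<alpha>*\<beta>) * (\<gamma>*\<delta>) < 0)"
  proof
    assume h: "(\<alpha>*\<beta>) * (\<gamma>*\<delta>) < 0"
    have "(\<alpha>*\<delta>) * (\<beta>*\<gamma>) < 0" using h by (simp add: algebra_simps)
    from opp_sign_gap[OF this] det show False by auto
  qed
  show ?thesis
  proof (cases "\<alpha>*\<beta> = 0 \<and> \<gamma>*\<delta> = 0")
    case True then show ?thesis by simp
  next
    case nz: False
    show ?thesis
    proof (cases "\<alpha>*\<beta> > 0 \<or> \<gamma>*\<delta> > 0")
      case True
      then have "\<alpha>*\<beta> \<ge> 0 \<and> \<gamma>*\<delta> \<ge> 0" using nopp
        by (metis linorder_not_le mult_pos_neg mult_neg_pos less_imp_le)
      then show ?thesis using sign_pos_case[OF det] nz True by auto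
    next
      case False
      then have le: "\<alpha>*\<beta> \<le> 0" "\<gamma>*\<delta> \<le> 0" by auto
      have det': "\<alpha>*(-\<delta>) - (-\<beta>)*\<gamma> = 1 \<or> \<alpha>*(-\<delta>) - (-\<beta>)*\<gamma> = -1" using det by auto
      have "(\<gamma>-\<alpha>)*((-\<delta>)-(-\<beta>)) \<ge> 0"
        using sign_pos_case[OF det'] le nz by auto
      then have "(\<gamma>-\<alpha>)*(\<delta>-\<beta>) \<le> 0" by (simp add: algebra_simps)
      then show ?thesis using le nz by auto
    qed
  qed
qed

lemma int_unit_prod:
  fixes x y :: int
  assumes "x*y = 1 \<or> x*y = -1"
  shows "(x = 1 \<or> x = -1) \<and> (y = 1 \<or> y = -1)"
proof -
  have "\<bar>x\<bar> * \<bar>y\<bar> = 1" using assms by (auto simp: abs_mult[symmetric])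
  then have "\<bar>x\<bar> = 1 \<and> \<bar>y\<bar> = 1 \<or> \<bar>x\<bar> = -1 \<and> \<bar>y\<bar> = -1" by (simp add: zmult_eq_1_iff)
  then have "\<bar>x\<bar> = 1 \<and> \<bar>y\<bar> = 1" by auto
  then show ?thesis by auto
qed


definition mL :: "real \<Rightarrow> real \<Rightarrow> real \<Rightarrow> real" where
  "mL q p x = 1 + (q\<^sup>2 - p\<^sup>2) * x / (p * q)"

lemma cmod_eq_iff_sq: "cmod u = cmod w \<longleftrightarrow> (Re u)\<^sup>2 + (Im u)\<^sup>2 = (Re w)\<^sup>2 + (Im w)\<^sup>2"
  by (metis cmod_power2 norm_ge_zero power2_eq_imp_eq)

lemma Lgeod_iff:
  assumes q: "fst s > 0" and p: "snd s > 0"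
  shows "z \<in> Lgeod s \<longleftrightarrow> Im z > 0 \<and> Re z \<ge> 0 \<and>
     (Re z)\<^sup>2 + (Im z)\<^sup>2 = mL (fst s) (snd s) (Re z)"
proof -
  define Q where "Q = real (fst s)"
  define P where "P = real (snd s)"
  have Q0: "Q > 0" and P0: "P > 0" using q p by (auto simp: Q_def P_def)
  define x0 where "x0 = ((Q/P)\<^sup>2 - 1) / (2 * (Q/P))"
  have x0': "2 * x0 = (Q\<^sup>2 - P\<^sup>2) / (P * Q)" using Q0 P0
    unfolding x0_def by (simp add: field_simps power2_eq_square)
  have "cmod (z - complex_of_real x0) = cmod (\<i> - complex_of_real x0) \<longleftrightarrow>
        (Re z - x0)\<^sup>2 + (Im z)\<^sup>2 = x0\<^sup>2 + 1"
    by (simp add: cmod_eq_iff_sq)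
  also have "\<dots> \<longleftrightarrow> (Re z)\<^sup>2 + (Im z)\<^sup>2 = 1 + (2 * x0) * Re z"
    by (simp add: power2_eq_square algebra_simps)
  also have "\<dots> \<longleftrightarrow> (Re z)\<^sup>2 + (Im z)\<^sup>2 = mL Q P (Re z)"
    unfolding mL_def x0' by simp
  finally show ?thesis
    unfolding Lgeod_def Let_def sval_def x0_def[symmetric] Q_def P_def
    using x0_def Q_def P_def by auto
qed

definition Bf :: "int \<times> int \<Rightarrow> int \<times> int \<Rightarrow> real \<Rightarrow> real \<Rightarrow> real" where
  "Bf v w x r = of_int (snd v * snd w) * r - of_int (fst v * snd w + snd v * fst w) * x
     + of_int (fst v * fst w)"

lemma geod_iff:
  assumes "fdet v w = 1 \<or> fdet v w = -1"
  shows "z \<in> geod_edge v w \<longleftrightarrow> Im z > 0 \<and> Bf v w (Re z) ((Re z)\<^sup>2 + (Im z)\<^sup>2) = 0"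
proof -
  obtain a b where v: "v = (a,b)" by (cases v)
  obtain c d where w: "w = (c,d)" by (cases w)
  have det: "a * d - c * b = 1 \<or> a * d - c * b = -1" using assms by (simp add: fdet_def v w)
  define x where "x = Re z"
  define y where "y = Im z"
  show ?thesis
  proof (cases "b = 0")
    case True
    then have "a * d = 1 \<or> a * d = -1" using det by auto
    then have a0: "a \<noteq> 0" and d0: "d \<noteq> 0" by auto
    have "Bf v w x r = - of_int a * (of_int d * x - of_int c)" for r
      by (simp add: Bf_def v w True algebra_simps)
    moreover have "of_int d * x - of_int c = 0 \<longleftrightarrow> x = of_int c / of_int d"
      using d0 by (auto simp: field_simps)
    ultimately show ?thesis using a0 True
      unfolding geod_edge_def v w x_def y_def by auto
  next
    case b0: False
    show ?thesis
    proof (cases "d = 0")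
      case True
      then have "a * d - c * b = - (c * b)" by simp
      then have "c * b = 1 \<or> c * b = -1" using det by auto
      then have c0: "c \<noteq> 0" by auto
      have "Bf v w x r = - of_int c * (of_int b * x - of_int a)" for r
        by (simp add: Bf_def v w True algebra_simps)
      moreover have "of_int b * x - of_int a = 0 \<longleftrightarrow> x = of_int a / of_int b"
        using b0 by (auto simp: field_simps)
      ultimately show ?thesis using c0 True b0
        unfolding geod_edge_def v w x_def y_def by auto
    next
      case d0: False
      define u where "u = (of_int a / of_int b :: real)"
      define t where "t = (of_int c / of_int d :: real)"
      have "cmod (z - complex_of_real ((u + t) / 2)) = \<bar>u - t\<bar> / 2 \<longleftrightarrow>
            (x - (u+t)/2)\<^sup>2 + y\<^sup>2 = ((u - t)/2)\<^sup>2"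
      proof -
        have "cmod (z - complex_of_real ((u + t) / 2)) = \<bar>u - t\<bar> / 2 \<longleftrightarrow>
              (cmod (z - complex_of_real ((u + t) / 2)))\<^sup>2 = (\<bar>u - t\<bar> / 2)\<^sup>2"
          by (metis abs_ge_zero norm_ge_zero power2_eq_imp_eq zero_le_divide_iff zero_le_numeral)
        also have "\<dots> \<longleftrightarrow> (x - (u+t)/2)\<^sup>2 + y\<^sup>2 = ((u - t)/2)\<^sup>2"
          by (simp add: cmod_power2 x_def y_def power_divide)
        finally show ?thesis .
      qed
      also have "\<dots> \<longleftrightarrow> x\<^sup>2 + y\<^sup>2 - (u + t) * x + u * t = 0"
      proof -
        have "(x - (u+t)/2)\<^sup>2 + y\<^sup>2 - ((u - t)/2)\<^sup>2 = x\<^sup>2 + y\<^sup>2 - (u + t) * x + u * t"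
          by (simp add: power2_eq_square field_simps)
        then show ?thesis by linarith
      qed
      also have "\<dots> \<longleftrightarrow> of_int b * of_int d * (x\<^sup>2 + y\<^sup>2 - (u + t) * x + u * t) = 0"
        using b0 d0 by simp
      also have "of_int b * of_int d * (x\<^sup>2 + y\<^sup>2 - (u + t) * x + u * t) = Bf v w x (x\<^sup>2 + y\<^sup>2)"
        using b0 d0 unfolding Bf_def v w u_def t_def by (simp add: field_simps)
      finally show ?thesis using b0 d0
        unfolding geod_edge_def v w x_def y_def u_def t_def by auto
    qed
  qed
qed

lemma Bf_sym: "Bf v w x r = Bf w v x r"
  by (simp add: Bf_def algebra_simps)

lemma Bf_bilin:
  fixes al be ga de :: int
  shows "Bf (al*a + ga*c, al*b + ga*d) (be*a + de*c, be*b + de*d) x r =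
    of_int (al*be) * Bf (a,b) (a,b) x r + of_int (al*de + be*ga) * Bf (a,b) (c,d) x r
    + of_int (ga*de) * Bf (c,d) (c,d) x r"
  by (simp add: Bf_def algebra_simps)

lemma Bf_self: "Bf (a,b) (a,b) x r = of_int b ^ 2 * (r - x\<^sup>2) + (of_int b * x - of_int a)\<^sup>2"
  by (simp add: Bf_def power2_eq_square algebra_simps)

lemma Bf_self_pos:
  assumes "r > x\<^sup>2" "(a,b) \<noteq> (0::int,0::int)"
  shows "Bf (a,b) (a,b) x r > 0"
proof (cases "b = 0")
  case True
  then have "a \<noteq> 0" using assms by auto
  then show ?thesis using True by (simp add: Bf_self)
next
  case False
  have "of_int b ^ 2 * (r - x\<^sup>2) > 0" using False assms(1) by simp
  moreover have "(of_int b * x - of_int a)\<^sup>2 \<ge> 0" by simp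
  ultimately show ?thesis by (subst Bf_self) linarith
qed

locale fpair =
  fixes a b c d :: int
  assumes a0: "a \<ge> 0" and b0: "b \<ge> 0" and c0: "c \<ge> 0" and d0: "d \<ge> 0"
    and det: "a*d - b*c = 1 \<or> a*d - b*c = -1"
begin

definition "eps = a*d - b*c"
definition "Q = real_of_int (a + c)"
definition "P = real_of_int (b + d)"
definition "K = real_of_int (a*c + b*d)"
definition "sg = Q / P"
definition "xAC = P * Q * K / (P\<^sup>2 * K + 1)"
definition "FF v w x = Bf v w x (mL Q P x)"

lemma eps_sq: "eps * eps = 1" using det by (auto simp: eps_def)

lemma q_pos: "a + c > 0"
proof (rule ccontr)
  assume "\<not> ?thesis" then have "a = 0" "c = 0" using a0 c0 by auto
  then show False using det by simp
qed

lemma p_pos: "b + d > 0"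
proof (rule ccontr)
  assume "\<not> ?thesis" then have "b = 0" "d = 0" using b0 d0 by auto
  then show False using det by simp
qed

lemma QP_pos: "Q > 0" "P > 0" using q_pos p_pos by (auto simp: Q_def P_def)

lemma K_nonneg: "K \<ge> 0" using a0 b0 c0 d0 by (simp add: K_def)

lemma xAC_nonneg: "xAC \<ge> 0"
  using QP_pos K_nonneg by (simp add: xAC_def)

lemma xAC_less: "xAC < sg"
proof -
  have "P\<^sup>2 * K \<ge> 0" using K_nonneg by simp
  then have h: "P\<^sup>2 * K + 1 > 0" by linarith
  have "xAC = sg * (P\<^sup>2 * K / (P\<^sup>2 * K + 1))" using QP_pos
    by (simp add: xAC_def sg_def field_simps power2_eq_square)
  moreover have "P\<^sup>2 * K / (P\<^sup>2 * K + 1) < 1" using h by simp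
  moreover have "sg > 0" using QP_pos by (simp add: sg_def)
  ultimately show ?thesis by (metis mult.right_neutral mult_strict_left_mono)
qed

lemma mL_minus_sq: "mL Q P x - x\<^sup>2 = (sg - x) * (x + P / Q)"
  using QP_pos by (simp add: mL_def sg_def field_simps power2_eq_square)

lemma FF_AC_scaled: "P * Q * FF (a,b) (c,d) x = P * Q * K - x * (P\<^sup>2 * K + 1)"
proof -
  have ie: "(b*d)*((a+c)^2-(b+d)^2) - (b+d)*(a+c)*(a*d+b*c) = -((b+d)^2*(a*c+b*d) + 1)"
  proof -
    have "(b*d)*((a+c)^2-(b+d)^2) - (b+d)*(a+c)*(a*d+b*c) = -((b+d)^2*(a*c+b*d) + eps*eps)"
      by (simp add: eps_def power2_eq_square algebra_simps)
    then show ?thesis using eps_sq by simp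
  qed
  have e: "of_int b * of_int d * (Q\<^sup>2 - P\<^sup>2) - P * Q * (of_int a * of_int d + of_int b * of_int c)
      = - (P\<^sup>2 * K + 1)"
    using arg_cong[OF ie, of real_of_int] unfolding Q_def P_def K_def
    by (simp add: algebra_simps)
  have "P * Q * FF (a,b) (c,d) x = P * Q * K + x * (of_int b * of_int d * (Q\<^sup>2 - P\<^sup>2)
      - P * Q * (of_int a * of_int d + of_int b * of_int c))"
    using QP_pos unfolding FF_def Bf_def mL_def K_def
    by (simp add: field_simps)
  also have "\<dots> = P * Q * K + x * (- (P\<^sup>2 * K + 1))" by (simp only: e)
  also have "\<dots> = P * Q * K - x * (P\<^sup>2 * K + 1)" by (simp add: algebra_simps)
  finally show ?thesis .
qed

lemma FF_AC_zero_iff: "FF (a,b) (c,d) x = 0 \<longleftrightarrow> x = xAC"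
proof -
  have h: "P\<^sup>2 * K \<ge> 0" using K_nonneg by simp
  have pq: "P * Q \<noteq> 0" using QP_pos by simp
  have "FF (a,b) (c,d) x = 0 \<longleftrightarrow> P * Q * FF (a,b) (c,d) x = 0" using pq by simp
  also have "\<dots> \<longleftrightarrow> P * Q * K = x * (P\<^sup>2 * K + 1)" unfolding FF_AC_scaled by simp
  also have "\<dots> \<longleftrightarrow> x = xAC" using h unfolding xAC_def by (auto simp: field_simps)
  finally show ?thesis .
qed

lemma mL_sg: "mL Q P sg = sg\<^sup>2"
  using QP_pos by (simp add: mL_def sg_def field_simps power2_eq_square)

lemma FF_sg: "FF v w sg = (of_int (snd v) * sg - of_int (fst v)) * (of_int (snd w) * sg - of_int (fst w))"
  unfolding FF_def mL_sg Bf_def by (simp add: power2_eq_square algebra_simps)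

lemma FF_affine:
  assumes "xAC < sg"
  shows "FF v w x = ((sg - x) / (sg - xAC)) * FF v w xAC + (1 - (sg - x) / (sg - xAC)) * FF v w sg"
proof -
  define u0 where "u0 = real_of_int (snd v * snd w + fst v * fst w)"
  define u1 where "u1 = real_of_int (snd v * snd w) * (Q\<^sup>2 - P\<^sup>2) / (P * Q) - real_of_int (fst v * snd w + snd v * fst w)"
  have g: "FF v w y = u0 + u1 * y" for y
    unfolding FF_def Bf_def mL_def u0_def u1_def by (simp add: algebra_simps)
  define l where "l = (sg - x) / (sg - xAC)"
  have l1: "l * (sg - xAC) = sg - x" using assms unfolding l_def by simp
  have l2: "l * xAC + (1 - l) * sg = sg - l * (sg - xAC)" by (simp add: algebra_simps)
  have lx: "l * xAC + (1 - l) * sg = x" using l1 l2 by simp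
  have "l * FF v w xAC + (1 - l) * FF v w sg = u0 + u1 * (l * xAC + (1 - l) * sg)"
    unfolding g by (simp add: algebra_simps)
  then show ?thesis using lx g l_def by simp
qed

lemma mL_gt_sq: assumes "0 \<le> x" "x < sg" shows "mL Q P x > x\<^sup>2"
proof -
  have "P / Q > 0" using QP_pos by simp
  then have "(sg - x) * (x + P / Q) > 0" using assms by (intro mult_pos_pos) auto
  then show ?thesis using mL_minus_sq[of x] by simp
qed

lemma key:
  fixes v w :: "int \<times> int"
  assumes fd: "fdet v w = 1 \<or> fdet v w = -1" and x1: "xAC \<le> x" and x2: "x < sg"
    and z: "FF v w x = 0"
  shows "x = xAC \<and> v \<in> {(a,b),(-a,-b),(c,d),(-c,-d)} \<and> w \<in> {(a,b),(-a,-b),(c,d),(-c,-d)}"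
proof -
  obtain v1 v2 where v: "v = (v1,v2)" by (cases v)
  obtain w1 w2 where w: "w = (w1,w2)" by (cases w)
  define al where "al = eps * (v1*d - c*v2)"
  define ga where "ga = eps * (a*v2 - v1*b)"
  define be where "be = eps * (w1*d - c*w2)"
  define de where "de = eps * (a*w2 - w1*b)"
  have ee: "eps * eps = 1" by (rule eps_sq)
  have v1: "v1 = al*a + ga*c" and v2: "v2 = al*b + ga*d"
    and w1: "w1 = be*a + de*c" and w2: "w2 = be*b + de*d"
  proof -
    have "al*a + ga*c = eps * (v1 * eps)" unfolding al_def ga_def eps_def by (simp add: algebra_simps)
    then show "v1 = al*a + ga*c" using ee by (metis mult.assoc mult.commute mult_1)
    have "al*b + ga*d = eps * (v2 * eps)" unfolding al_def ga_def eps_def by (simp add: algebra_simps)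
    then show "v2 = al*b + ga*d" using ee by (metis mult.assoc mult.commute mult_1)
    have "be*a + de*c = eps * (w1 * eps)" unfolding be_def de_def eps_def by (simp add: algebra_simps)
    then show "w1 = be*a + de*c" using ee by (metis mult.assoc mult.commute mult_1)
    have "be*b + de*d = eps * (w2 * eps)" unfolding be_def de_def eps_def by (simp add: algebra_simps)
    then show "w2 = be*b + de*d" using ee by (metis mult.assoc mult.commute mult_1)
  qed
  have fdv: "fdet v w = (al*de - be*ga) * eps"
    unfolding fdet_def v w v1 v2 w1 w2 eps_def by (simp add: algebra_simps)
  have d1: "al*de - be*ga = 1 \<or> al*de - be*ga = -1"
  proof -
    have "(al*de - be*ga) * eps * eps = fdet v w * eps" using fdv by simp
    then have "al*de - be*ga = fdet v w * eps" using ee by (simp add: mult.assoc)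
    then show ?thesis using fd det unfolding eps_def by auto
  qed
  have xAC0: "0 \<le> xAC" by (rule xAC_nonneg)
  have mpos: "mL Q P xAC > xAC\<^sup>2" using mL_gt_sq[OF xAC0 xAC_less] .
  define PP where "PP = FF (a,b) (a,b) xAC"
  define RR where "RR = FF (c,d) (c,d) xAC"
  have PP: "PP > 0" unfolding PP_def FF_def
    by (rule Bf_self_pos[OF mpos]) (use det in auto)
  have RR: "RR > 0" unfolding RR_def FF_def
    by (rule Bf_self_pos[OF mpos]) (use det in auto)
  have ACz: "FF (a,b) (c,d) xAC = 0" using FF_AC_zero_iff by simp
  have at_xAC: "FF v w xAC = of_int (al*be) * PP + of_int (ga*de) * RR"
    unfolding FF_def v w v1 v2 w1 w2 Bf_bilin PP_def RR_def
    using ACz unfolding FF_def by simp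
  have sgA: "of_int b * sg - of_int a = - of_int eps / P" and sgC: "of_int d * sg - of_int c = of_int eps / P"
    using QP_pos unfolding sg_def Q_def P_def eps_def by (simp_all add: field_simps)
  have sv: "of_int v2 * sg - of_int v1 = of_int eps * of_int (ga - al) / P"
  proof -
    have "of_int v2 * sg - of_int v1 = of_int al * (of_int b * sg - of_int a) + of_int ga * (of_int d * sg - of_int c)"
      unfolding v1 v2 by (simp add: algebra_simps)
    then show ?thesis unfolding sgA sgC using QP_pos by (simp add: field_simps)
  qed
  have sw: "of_int w2 * sg - of_int w1 = of_int eps * of_int (de - be) / P"
  proof -
    have "of_int w2 * sg - of_int w1 = of_int be * (of_int b * sg - of_int a) + of_int de * (of_int d * sg - of_int c)"
      unfolding w1 w2 by (simp add: algebra_simps)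
    then show ?thesis unfolding sgA sgC using QP_pos by (simp add: field_simps)
  qed
  have at_sg: "FF v w sg = of_int ((ga - al) * (de - be)) / P\<^sup>2"
  proof -
    have "FF v w sg = (of_int eps * of_int (ga - al) / P) * (of_int eps * of_int (de - be) / P)"
      unfolding FF_sg v w using sv sw by simp
    also have "\<dots> = of_int (eps*eps) * of_int ((ga - al) * (de - be)) / P\<^sup>2"
      by (simp add: power2_eq_square)
    finally show ?thesis using ee by simp
  qed
  define l where "l = (sg - x) / (sg - xAC)"
  have lpos: "l > 0" using x2 xAC_less unfolding l_def by simp
  have lle: "l \<le> 1" using x1 xAC_less unfolding l_def by simp
  have Fx: "FF v w x = l * (of_int (al*be) * PP + of_int (ga*de) * RR) + (1 - l) * (of_int ((ga - al) * (de - be)) / P\<^sup>2)"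
    using FF_affine[OF xAC_less, of v w x] at_xAC at_sg unfolding l_def by simp
  have P2: "P\<^sup>2 > 0" using QP_pos by simp
  have cs: "(al*be = 0 \<and> ga*de = 0) \<or>
    (al*be \<ge> 0 \<and> ga*de \<ge> 0 \<and> (al*be > 0 \<or> ga*de > 0) \<and> (ga-al)*(de-be) \<ge> 0) \<or>
    (al*be \<le> 0 \<and> ga*de \<le> 0 \<and> (al*be < 0 \<or> ga*de < 0) \<and> (ga-al)*(de-be) \<le> 0)"
    using int_sign[OF d1] .
  define S where "S = of_int (al*be) * PP + of_int (ga*de) * RR"
  define T where "T = of_int ((ga - al) * (de - be)) / P\<^sup>2"
  have Fx': "FF v w x = l * S + (1 - l) * T" using Fx unfolding S_def T_def .
  have c1: "al*be = 0 \<and> ga*de = 0"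
  proof (rule ccontr)
    assume nc: "\<not> ?thesis"
    have ol: "1 - l \<ge> 0" using lle by simp
    show False
    proof (cases "al*be \<ge> 0 \<and> ga*de \<ge> 0 \<and> (al*be > 0 \<or> ga*de > 0) \<and> (ga-al)*(de-be) \<ge> 0")
      case True
      have X: "real_of_int (al*be) \<ge> 0" "real_of_int (ga*de) \<ge> 0"
        "real_of_int (al*be) > 0 \<or> real_of_int (ga*de) > 0" using True by (simp_all del: of_int_mult)
      have Y: "real_of_int (al*be) * PP \<ge> 0" "real_of_int (ga*de) * RR \<ge> 0"
        using X PP RR by (simp_all del: of_int_mult)
      have "real_of_int (al*be) * PP > 0 \<or> real_of_int (ga*de) * RR > 0"
        using X(3) PP RR by (metis mult_pos_pos)
      then have t1: "S > 0" unfolding S_def using Y by linarith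
      have "real_of_int ((ga - al) * (de - be)) \<ge> 0" using True by (simp del: of_int_mult of_int_diff)
      then have t2: "T \<ge> 0" unfolding T_def using P2 by (simp del: of_int_mult of_int_diff)
      have "l * S > 0" using lpos t1 by simp
      moreover have "(1 - l) * T \<ge> 0" using ol t2 by simp
      ultimately show False using z Fx' by linarith
    next
      case False
      then have F3: "al*be \<le> 0 \<and> ga*de \<le> 0 \<and> (al*be < 0 \<or> ga*de < 0) \<and> (ga-al)*(de-be) \<le> 0"
        using cs nc by blast
      have X: "real_of_int (al*be) \<le> 0" "real_of_int (ga*de) \<le> 0"
        "real_of_int (al*be) < 0 \<or> real_of_int (ga*de) < 0" using F3 by (simp_all del: of_int_mult)
      have Y: "real_of_int (al*be) * PP \<le> 0" "real_of_int (ga*de) * RR \<le> 0"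
        using X PP RR by (simp_all add: mult_nonpos_nonneg del: of_int_mult)
      have "real_of_int (al*be) * PP < 0 \<or> real_of_int (ga*de) * RR < 0"
        using X(3) PP RR by (metis mult_neg_pos)
      then have t1: "S < 0" unfolding S_def using Y by linarith
      have "real_of_int ((ga - al) * (de - be)) \<le> 0" using F3 by (simp del: of_int_mult of_int_diff)
      then have t2: "T \<le> 0" unfolding T_def using P2 by (simp add: divide_nonpos_pos del: of_int_mult of_int_diff)
      have "l * S < 0" using lpos t1 by (simp add: mult_pos_neg)
      moreover have "(1 - l) * T \<le> 0" using ol t2 by (simp add: mult_nonneg_nonpos)
      ultimately show False using z Fx' by linarith
    qed
  qed
  have vals: "(al = 0 \<and> de = 0 \<and> (be = 1 \<or> be = -1) \<and> (ga = 1 \<or> ga = -1)) \<or>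
              (be = 0 \<and> ga = 0 \<and> (al = 1 \<or> al = -1) \<and> (de = 1 \<or> de = -1))"
  proof (cases "al = 0")
    case True
    then have "be*ga = 1 \<or> be*ga = -1" using d1 by auto
    then have "(be = 1 \<or> be = -1) \<and> (ga = 1 \<or> ga = -1)" by (rule int_unit_prod)
    then have "de = 0" using c1 by auto
    then show ?thesis using True \<open>(be = 1 \<or> be = -1) \<and> (ga = 1 \<or> ga = -1)\<close> by simp
  next
    case False
    then have "be = 0" using c1 by simp
    then have "al*de = 1 \<or> al*de = -1" using d1 by auto
    then have "(al = 1 \<or> al = -1) \<and> (de = 1 \<or> de = -1)" by (rule int_unit_prod)
    then have "ga = 0" using c1 by auto
    then show ?thesis using \<open>be = 0\<close> \<open>(al = 1 \<or> al = -1) \<and> (de = 1 \<or> de = -1)\<close> by simp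
  qed
  have nz: "(ga - al) * (de - be) \<noteq> 0" using vals by auto
  have "real_of_int (al*be) = 0" "real_of_int (ga*de) = 0" using c1 by (simp_all del: of_int_mult)
  then have "S = 0" unfolding S_def by (simp only: mult_zero_left add_0)
  then have "(1 - l) * T = 0" using z Fx' by simp
  moreover have "T \<noteq> 0" unfolding T_def using nz P2 by (simp del: of_int_mult of_int_diff)
  ultimately have "l = 1" by simp
  then have xe: "x = xAC" using xAC_less unfolding l_def by (simp add: field_simps)
  show ?thesis using vals xe unfolding v w v1 v2 w1 w2 by auto
qed

end


lemma coprime_from_det:
  fixes a b c d :: int
  assumes "a*d - b*c = 1 \<or> a*d - b*c = -1"
  shows "coprime a b"
proof (rule coprimeI)
  fix g assume "g dvd a" "g dvd b"
  then have "g dvd a*d - b*c" by simp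
  then show "is_unit g" using assms by auto
qed

lemma prop_coprime_eq:
  fixes t1 t2 a b :: nat
  assumes c1: "coprime t1 t2" and c2: "coprime a b" and e: "t1 * b = t2 * a"
  shows "t1 = a \<and> t2 = b"
proof -
  have "t1 dvd t2 * a" unfolding e[symmetric] by simp
  then have 1: "t1 dvd a" using c1 by (simp add: coprime_dvd_mult_right_iff)
  have "a dvd t1 * b" unfolding e by simp
  then have 2: "a dvd t1" using c2 by (simp add: coprime_dvd_mult_left_iff)
  have "t2 dvd t1 * b" unfolding e by simp
  then have 3: "t2 dvd b" using c1 by (simp add: coprime_dvd_mult_right_iff coprime_commute)
  have "b dvd t2 * a" unfolding e[symmetric] by simp
  then have 4: "b dvd t2" using c2 by (simp add: coprime_dvd_mult_left_iff coprime_commute)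
  show ?thesis using 1 2 3 4 by (simp add: dvd_antisym)
qed

lemma fe_fdet: "farey_edge v w \<Longrightarrow> fdet v w = 1 \<or> fdet v w = -1"
  unfolding farey_edge_def by (auto simp: fdet_def algebra_simps)

context fpair
begin

definition "sA = (nat a, nat b)"
definition "sC = (nat c, nat d)"
definition "ss = (nat (a+c), nat (b+d))"

lemma ss_real: "real (fst ss) = Q" "real (snd ss) = P"
  using a0 b0 c0 d0 by (simp_all add: ss_def Q_def P_def)

lemma ss_pos: "fst ss > 0" "snd ss > 0"
  using q_pos p_pos by (simp_all add: ss_def)

lemma Lgeod_ss: "z \<in> Lgeod ss \<longleftrightarrow> Im z > 0 \<and> Re z \<ge> 0 \<and> (Re z)\<^sup>2 + (Im z)\<^sup>2 = mL Q P (Re z)"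
  using Lgeod_iff[OF ss_pos] unfolding ss_real .

lemma sval_ss: "sval ss = sg"
  unfolding sval_def ss_real sg_def ..

lemma dist_L:
  assumes "z \<in> Lgeod ss"
  shows "(cmod (z - complex_of_real sg))\<^sup>2 = 1 + sg\<^sup>2 - Re z * (sg + 1/sg)"
proof -
  have m: "(Re z)\<^sup>2 + (Im z)\<^sup>2 = mL Q P (Re z)" using assms Lgeod_ss by blast
  have "(cmod (z - complex_of_real sg))\<^sup>2 = (Re z - sg)\<^sup>2 + (Im z)\<^sup>2"
    by (simp add: cmod_power2)
  also have "\<dots> = ((Re z)\<^sup>2 + (Im z)\<^sup>2) - 2 * sg * Re z + sg\<^sup>2"
    by (simp add: power2_eq_square algebra_simps)
  also have "\<dots> = mL Q P (Re z) - 2 * sg * Re z + sg\<^sup>2" using m by simp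
  also have "\<dots> = 1 + sg\<^sup>2 - Re z * (sg + 1/sg)"
    using QP_pos unfolding mL_def sg_def by (simp add: field_simps power2_eq_square)
  finally show ?thesis .
qed

lemma dist_le_iff:
  assumes "z \<in> Lgeod ss" "z' \<in> Lgeod ss"
  shows "cmod (z - complex_of_real sg) \<le> cmod (z' - complex_of_real sg) \<longleftrightarrow> Re z' \<le> Re z"
proof -
  have sp: "sg + 1/sg > 0" using QP_pos by (simp add: sg_def add_pos_pos)
  have "cmod (z - complex_of_real sg) \<le> cmod (z' - complex_of_real sg) \<longleftrightarrow>
        (cmod (z - complex_of_real sg))\<^sup>2 \<le> (cmod (z' - complex_of_real sg))\<^sup>2"
    by (simp add: power_mono_iff)
  also have "\<dots> \<longleftrightarrow> Re z' * (sg + 1/sg) \<le> Re z * (sg + 1/sg)"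
    unfolding dist_L[OF assms(1)] dist_L[OF assms(2)] by linarith
  also have "\<dots> \<longleftrightarrow> Re z' \<le> Re z" using sp by simp
  finally show ?thesis .
qed

lemma cross_props:
  assumes "crosses ss v w z"
  shows "(fdet v w = 1 \<or> fdet v w = -1) \<and> Re z \<ge> 0 \<and> Re z < sg \<and> FF v w (Re z) = 0"
proof -
  have fd: "fdet v w = 1 \<or> fdet v w = -1" using assms fe_fdet unfolding crosses_def by blast
  have g: "z \<in> geod_edge v w" and l: "z \<in> Lgeod ss" using assms unfolding crosses_def by auto
  have B: "Bf v w (Re z) ((Re z)\<^sup>2 + (Im z)\<^sup>2) = 0" using g geod_iff[OF fd] by blast
  have L: "Im z > 0" "Re z \<ge> 0" "(Re z)\<^sup>2 + (Im z)\<^sup>2 = mL Q P (Re z)" using l Lgeod_ss by blast+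
  have "(Im z)\<^sup>2 > 0" using L(1) by simp
  then have "mL Q P (Re z) - (Re z)\<^sup>2 > 0" using L(3) by linarith
  then have "(sg - Re z) * (Re z + P/Q) > 0" using mL_minus_sq by simp
  moreover have "Re z + P/Q > 0" using L(2) QP_pos by (simp add: add_nonneg_pos)
  ultimately have "sg - Re z > 0" by (simp add: zero_less_mult_iff)
  then show ?thesis using fd L B unfolding FF_def by simp
qed

lemma cross_le:
  assumes "crosses ss v w z"
  shows "Re z \<le> xAC"
proof (rule ccontr)
  assume "\<not> ?thesis"
  then have "xAC \<le> Re z" "Re z \<noteq> xAC" by auto
  with key[of v w "Re z"] cross_props[OF assms] show False by auto
qed

definition "z0 = Complex xAC (sqrt (mL Q P xAC - xAC\<^sup>2))"

lemma z0_props: "z0 \<in> Lgeod ss" "z0 \<in> geod_edge (a,b) (c,d)" "Re z0 = xAC"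
proof -
  have mpos: "mL Q P xAC - xAC\<^sup>2 > 0" using mL_gt_sq[OF xAC_nonneg xAC_less] by simp
  have im: "Im z0 > 0" "Re z0 = xAC" using mpos by (simp_all add: z0_def)
  have sq: "(Re z0)\<^sup>2 + (Im z0)\<^sup>2 = mL Q P xAC" using mpos by (simp add: z0_def)
  show "z0 \<in> Lgeod ss" using im sq xAC_nonneg Lgeod_ss by simp
  have fd: "fdet (a,b) (c,d) = 1 \<or> fdet (a,b) (c,d) = -1" using det by (simp add: fdet_def algebra_simps)
  have "FF (a,b) (c,d) xAC = 0" using FF_AC_zero_iff by simp
  then show "z0 \<in> geod_edge (a,b) (c,d)" using geod_iff[OF fd] im sq unfolding FF_def by simp
  show "Re z0 = xAC" by (rule im(2))
qed

lemma fe_AC: "farey_edge (a,b) (c,d)"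
  unfolding farey_edge_def using det by (auto simp: fdet_def algebra_simps)

lemma z0_cross: "crosses ss (a,b) (c,d) z0"
  unfolding crosses_def using fe_AC z0_props by auto

lemma first_AC: "first_edge ss (a,b) (c,d)"
  unfolding first_edge_def sval_ss
proof (intro exI conjI allI impI)
  show "crosses ss (a,b) (c,d) z0" by (rule z0_cross)
  fix v' w' z' assume c: "crosses ss v' w' z'"
  have "z' \<in> Lgeod ss" using c unfolding crosses_def by auto
  moreover have "Re z' \<le> Re z0" using cross_le[OF c] z0_props(3) by simp
  ultimately show "cmod (z0 - complex_of_real sg) \<le> cmod (z' - complex_of_real sg)"
    using dist_le_iff z0_props(1) by blast
qed

lemma first_only:
  assumes "first_edge ss v w"
  shows "v \<in> {(a,b),(-a,-b),(c,d),(-c,-d)} \<and> w \<in> {(a,b),(-a,-b),(c,d),(-c,-d)}"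
proof -
  obtain z where c: "crosses ss v w z" and m: "\<forall>v' w' z'. crosses ss v' w' z' \<longrightarrow>
      cmod (z - complex_of_real sg) \<le> cmod (z' - complex_of_real sg)"
    using assms unfolding first_edge_def sval_ss by blast
  have "cmod (z - complex_of_real sg) \<le> cmod (z0 - complex_of_real sg)" using m z0_cross by blast
  moreover have "z \<in> Lgeod ss" using c unfolding crosses_def by auto
  ultimately have "Re z0 \<le> Re z" using dist_le_iff z0_props(1) by blast
  then have "xAC \<le> Re z" using z0_props(3) by simp
  then show ?thesis using key[of v w "Re z"] cross_props[OF c] by blast
qed

lemma inQ_A: "inQ sA"
proof -
  have "coprime a b" using coprime_from_det[OF det] .
  then show ?thesis using a0 b0 unfolding inQ_def sA_def
    by (metis coprime_int_iff fst_conv snd_conv nat_0_le)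
qed

lemma inQ_C: "inQ sC"
proof -
  have "c*b - d*a = 1 \<or> c*b - d*a = -1" using det by (auto simp: algebra_simps)
  then have "coprime c d" using coprime_from_det by blast
  then show ?thesis using c0 d0 unfolding inQ_def sC_def
    by (metis coprime_int_iff fst_conv snd_conv nat_0_le)
qed

lemma same_pt_A:
  assumes "inQ t" "v = (a,b) \<or> v = (-a,-b)" "same_pt t v"
  shows "t = sA"
proof -
  have "int (fst t) * b = int (snd t) * a" using assms(2,3) unfolding same_pt_def by auto
  then have "fst t * nat b = snd t * nat a" using a0 b0
    by (metis nat_int nat_mult_distrib of_nat_0_le_iff)
  then show ?thesis using prop_coprime_eq[of "fst t" "snd t" "nat a" "nat b"] assms(1) inQ_A
    unfolding inQ_def sA_def by (metis fst_conv snd_conv prod.collapse)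
qed

lemma same_pt_C:
  assumes "inQ t" "v = (c,d) \<or> v = (-c,-d)" "same_pt t v"
  shows "t = sC"
proof -
  have "int (fst t) * d = int (snd t) * c" using assms(2,3) unfolding same_pt_def by auto
  then have "fst t * nat d = snd t * nat c" using c0 d0
    by (metis nat_int nat_mult_distrib of_nat_0_le_iff)
  then show ?thesis using prop_coprime_eq[of "fst t" "snd t" "nat c" "nat d"] assms(1) inQ_C
    unfolding inQ_def sC_def by (metis fst_conv snd_conv prod.collapse)
qed

lemma parents_ss:
  assumes "ss \<noteq> (1,1)"
  shows "parents ss = {sA, sC}"
proof -
  have nb: "\<not> (ss = (0,1) \<or> ss = (1,0))" using ss_pos by auto
  have "parents ss = {t. inQ t \<and> (\<exists>v w. first_edge ss v w \<and> (same_pt t v \<or> same_pt t w))}"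
    unfolding parents_def using assms nb by simp
  also have "\<dots> = {sA, sC}"
  proof (intro set_eqI iffI)
    fix t assume "t \<in> {t. inQ t \<and> (\<exists>v w. first_edge ss v w \<and> (same_pt t v \<or> same_pt t w))}"
    then obtain v w where t: "inQ t" "first_edge ss v w" "same_pt t v \<or> same_pt t w" by blast
    have vw: "v \<in> {(a,b),(-a,-b),(c,d),(-c,-d)}" "w \<in> {(a,b),(-a,-b),(c,d),(-c,-d)}"
      using first_only[OF t(2)] by auto
    show "t \<in> {sA, sC}"
    proof (cases "same_pt t v")
      case True
      then show ?thesis using vw(1) same_pt_A[OF t(1) _ True] same_pt_C[OF t(1) _ True] by auto
    next
      case False
      then have "same_pt t w" using t(3) by blast
      then show ?thesis using vw(2) same_pt_A[OF t(1)] same_pt_C[OF t(1)] by auto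
    qed
  next
    fix t assume "t \<in> {sA, sC}"
    moreover have "same_pt sA (a,b)" "same_pt sC (c,d)" using a0 b0 c0 d0
      by (simp_all add: same_pt_def sA_def sC_def mult.commute)
    ultimately show "t \<in> {t. inQ t \<and> (\<exists>v w. first_edge ss v w \<and> (same_pt t v \<or> same_pt t w))}"
      using first_AC inQ_A inQ_C by blast
  qed
  finally show ?thesis .
qed

end


lemma (in fpair) sizes_pos: "a + b \<ge> 1" "c + d \<ge> 1"
proof -
  show "a + b \<ge> 1"
  proof (rule ccontr)
    assume "\<not> ?thesis" then have "a = 0" "b = 0" using a0 b0 by auto
    then show False using det by simp
  qed
  show "c + d \<ge> 1"
  proof (rule ccontr)
    assume "\<not> ?thesis" then have "c = 0" "d = 0" using c0 d0 by auto
    then show False using det by simp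
  qed
qed

lemma fpair_eq_size:
  assumes "fpair a b c d" "a + b = c + d"
  shows "a + b = 1"
proof -
  interpret fpair a b c d by fact
  have dd: "d = a + b - c" using assms(2) by simp
  have "a*d - b*c = (a + b) * (a - c)" unfolding dd by (simp add: algebra_simps)
  then have "(a+b) * (a - c) = 1 \<or> (a+b) * (a - c) = -1" using det by simp
  then have "a + b = 1 \<or> a + b = -1" using int_unit_prod by blast
  then show ?thesis using a0 b0 by auto
qed

lemma fpair_order:
  assumes "fpair a b c d" "a + b < c + d" "\<not> (a + c = 1 \<and> b + d = 1)"
  shows "a \<le> c \<and> b \<le> d"
proof -
  interpret fpair a b c d by fact
  have "a \<le> c"
  proof (rule ccontr)
    assume "\<not> a \<le> c"
    then have ac: "a \<ge> c + 1" by simp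
    then have db: "d \<ge> b + 1" using assms(2) by simp
    have "a * d \<ge> (c+1) * (b+1)" using ac db c0 b0 by (intro mult_mono) auto
    then have "a*d - b*c \<ge> b + c + 1" by (simp add: algebra_simps)
    then have "a*d - b*c = 1" "b = 0" "c = 0" using det b0 c0 by auto
    then have "a = 1" "d = 1" using a0 d0 int_unit_prod[of a d] by auto
    then show False using assms(3) \<open>b = 0\<close> \<open>c = 0\<close> by simp
  qed
  moreover have "b \<le> d"
  proof (rule ccontr)
    assume "\<not> b \<le> d"
    then have bd: "b \<ge> d + 1" by simp
    then have ca: "c \<ge> a + 1" using assms(2) by simp
    have "b * c \<ge> (d+1) * (a+1)" using bd ca d0 a0 by (intro mult_mono) auto
    then have "b*c - a*d \<ge> a + d + 1" by (simp add: algebra_simps)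
    then have "a*d - b*c = -1" "a = 0" "d = 0" using det a0 d0 by auto
    then have "b = 1" "c = 1" using b0 c0 int_unit_prod[of b c] by auto
    then show False using assms(3) \<open>a = 0\<close> \<open>d = 0\<close> by simp
  qed
  ultimately show ?thesis ..
qed

lemma inQ_cases:
  assumes "inQ s" "s \<noteq> (0,1)" "s \<noteq> (1,0)"
  shows "fst s \<ge> 1 \<and> snd s \<ge> 1"
proof -
  obtain q p where s: "s = (q,p)" by (cases s)
  have c: "coprime q p" using assms(1) s by (simp add: inQ_def)
  have "q \<noteq> 0"
  proof
    assume "q = 0" then have "p = 1" using c by simp
    then show False using assms(2) s \<open>q = 0\<close> by simp
  qed
  moreover have "p \<noteq> 0"
  proof
    assume "p = 0" then have "q = 1" using c by simp
    then show False using assms(3) s \<open>p = 0\<close> by simp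
  qed
  ultimately show ?thesis using s by simp
qed

lemma farey_exists:
  assumes "inQ s" "s \<noteq> (0,1)" "s \<noteq> (1,0)" "s \<noteq> (1,1)"
  obtains a b c d where "fpair a b c d" "fpair.ss a b c d = s" "a + b < c + d" "a \<le> c" "b \<le> d"
proof -
  obtain q p where s: "s = (q,p)" by (cases s)
  have qp: "q \<ge> 1" "p \<ge> 1" using inQ_cases[OF assms(1-3)] s by auto
  have cop: "coprime (int q) (int p)" using assms(1) s by (simp add: inQ_def)
  have ex: "\<exists>a b c d. fpair a b c d \<and> a + c = int q \<and> b + d = int p"
  proof (cases "q = 1")
    case True
    have "fpair 0 1 1 (int p - 1)" by unfold_locales (use qp in auto)
    then show ?thesis using True
      by (intro exI[of _ 0] exI[of _ 1] exI[of _ 1] exI[of _ "int p - 1"]) simp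
  next
    case False
    then have q2: "int q \<ge> 2" using qp by simp
    obtain u v where uv: "u * int q + v * int p = 1" using bezout_int[of "int q" "int p"] cop
      by (metis coprime_iff_gcd_eq_1)
    define a where "a = v mod int q"
    have a0: "0 \<le> a" "a < int q" using q2 unfolding a_def by auto
    have "int q dvd a * int p - 1"
    proof -
      have m: "v mod int q = v - int q * (v div int q)" by (simp add: minus_mult_div_eq_mod)
      have "a * int p - 1 = (v - int q * (v div int q)) * int p - (u * int q + v * int p)"
        using uv m a_def by simp
      also have "\<dots> = int q * (- (v div int q) * int p - u)" by (simp add: algebra_simps)
      finally show ?thesis by simp
    qed
    then obtain b where b: "a * int p - 1 = int q * b" by blast
    have b0: "b \<ge> 0"
    proof (rule ccontr)
      assume "\<not> b \<ge> 0"
      then have "int q * b \<le> int q * (-1)" using q2 by (intro mult_left_mono) auto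
      moreover have "a * int p \<ge> 0" using a0 by simp
      ultimately show False using b q2 by linarith
    qed
    have bp: "b < int p"
    proof (rule ccontr)
      assume "\<not> b < int p"
      then have "int q * b \<ge> int q * int p" using q2 by (intro mult_left_mono) auto
      moreover have "a * int p \<le> (int q - 1) * int p" using a0 qp by (intro mult_right_mono) auto
      ultimately show False using b by (simp add: algebra_simps)
    qed
    have "fpair a b (int q - a) (int p - b)"
    proof
      show "a * (int p - b) - b * (int q - a) = 1 \<or> a * (int p - b) - b * (int q - a) = -1"
        using b by (simp add: algebra_simps)
    qed (use a0 b0 bp in auto)
    then show ?thesis
      by (intro exI[of _ a] exI[of _ b] exI[of _ "int q - a"] exI[of _ "int p - b"]) simp
  qed
  then obtain a b c d where f: "fpair a b c d" "a + c = int q" "b + d = int p" by blast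
  interpret fpair a b c d by fact
  have ssq: "ss = s" using f(2,3) s by (simp add: ss_def)
  have n11: "\<not> (a + c = 1 \<and> b + d = 1)" using assms(4) s f(2,3) by auto
  have ne: "a + b \<noteq> c + d"
  proof
    assume e: "a + b = c + d"
    then have "a + b = 1" by (rule fpair_eq_size[OF f(1)])
    then have "int q + int p = 2" using e f(2,3) by linarith
    then have "q = 1" "p = 1" using qp by auto
    then show False using assms(4) s by simp
  qed
  show ?thesis
  proof (cases "a + b < c + d")
    case True
    then show ?thesis using that[OF f(1)] ssq fpair_order[OF f(1) True n11] by blast
  next
    case False
    then have lt: "c + d < a + b" using ne by simp
    have f': "fpair c d a b" by unfold_locales (use a0 b0 c0 d0 det in \<open>auto simp: algebra_simps\<close>)
    have "fpair.ss c d a b = s" using ssq by (simp add: fpair.ss_def[OF f'] ss_def add.commute)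
    moreover have "\<not> (c + a = 1 \<and> d + b = 1)" using n11 by (simp add: add.commute)
    ultimately show ?thesis using that[OF f'] fpair_order[OF f' lt] lt by blast
  qed
qed

lemma parents_small:
  assumes "inQ t" "u \<in> parents t"
  shows "qsize u < qsize t"
proof -
  consider "t = (1,1)" | "t = (0,1) \<or> t = (1,0)" | "t \<noteq> (1,1)" "t \<noteq> (0,1)" "t \<noteq> (1,0)" by blast
  then show ?thesis
  proof cases
    case 1 then show ?thesis using assms(2) by (auto simp: parents_def qsize_def)
  next
    case 2 then show ?thesis using assms(2) by (auto simp: parents_def)
  next
    case 3
    obtain a b c d where f: "fpair a b c d" "fpair.ss a b c d = t" "a + b < c + d" "a \<le> c" "b \<le> d"
      using farey_exists[OF assms(1) 3(2,3,1)] by blast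
    interpret fpair a b c d by fact
    have "parents t = {sA, sC}" using parents_ss f(2) 3(1) by blast
    moreover have "a + b \<ge> 1" "c + d \<ge> 1" using det a0 b0 c0 d0
      by (smt (verit, ccfv_SIG) mult_eq_0_iff)+
    ultimately show ?thesis using assms(2) f(2) a0 b0 c0 d0
      by (auto simp: qsize_def sA_def sC_def ss_def)
  qed
qed


locale fpo = fpair +
  assumes ord: "a + b < c + d" and ac: "a \<le> c" and bd: "b \<le> d"
    and n11: "\<not> (a + c = 1 \<and> b + d = 1)"
begin

definition "sD = (nat (c - a), nat (d - b))"

lemma ss_n11: "ss \<noteq> (1,1)"
proof
  assume "ss = (1,1)"
  then have "nat (a + c) = 1" "nat (b + d) = 1" by (auto simp: ss_def)
  then have "a + c = 1" "b + d = 1" by auto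
  then show False using n11 by simp
qed

lemma f2: "fpair a b (c - a) (d - b)"
  by unfold_locales (use a0 b0 ac bd det in \<open>auto simp: algebra_simps\<close>)

lemma parents_C: "parents sC = {sA, sD}"
proof (cases "sC = (1,1)")
  case True
  then have "nat c = 1" "nat d = 1" by (auto simp: sC_def)
  then have cd: "c = 1" "d = 1" by auto
  have "a + b = 1" using ord sizes_pos cd by simp
  then have ab: "(a = 1 \<and> b = 0) \<or> (a = 0 \<and> b = 1)" using a0 b0 by auto
  have g: "parents (1,1) = {(nat a, nat b), (nat (1 - a), nat (1 - b))}"
    using ab by (auto simp: parents_def)
  show ?thesis using g True cd unfolding sA_def sD_def by simp
next
  case False
  interpret g: fpair a b "c - a" "d - b" by (rule f2)
  have "g.ss = sC" by (simp add: g.ss_def sC_def)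
  moreover have "g.sA = sA" by (simp add: g.sA_def sA_def)
  moreover have "g.sC = sD" by (simp add: g.sC_def sD_def)
  ultimately show ?thesis using g.parents_ss False by simp
qed

lemma inQ_D: "inQ sD"
proof -
  interpret g: fpair a b "c - a" "d - b" by (rule f2)
  show ?thesis using g.inQ_C by (simp add: g.sC_def sD_def)
qed

lemma sA_ne_sC: "sA \<noteq> sC"
proof
  assume "sA = sC"
  then have "nat a = nat c" "nat b = nat d" by (auto simp: sA_def sC_def)
  then have "a = c" "b = d" using a0 b0 c0 d0 by auto
  then show False using ord by simp
qed

lemma sD_ne_sA: "sD \<noteq> sA"
proof
  assume "sD = sA"
  then have "nat (c - a) = nat a" "nat (d - b) = nat b" by (auto simp: sA_def sD_def)
  then have "c = 2 * a" "d = 2 * b" using a0 b0 ac bd by auto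
  then show False using det by (simp add: algebra_simps)
qed

lemma labels_ss: "labels ss = (sA, sC, sD)"
  unfolding labels_def
proof (rule some_equality)
  show "case (sA, sC, sD) of (s0, s1, s') \<Rightarrow> s0 \<noteq> s1 \<and> parents ss = {s0, s1} \<and>
          inQ s' \<and> s' \<noteq> s0 \<and> parents s1 = {s0, s'}"
    using sA_ne_sC parents_ss[OF ss_n11] inQ_D sD_ne_sA parents_C by simp
next
  fix x
  assume h: "case x of (s0, s1, s') \<Rightarrow> s0 \<noteq> s1 \<and> parents ss = {s0, s1} \<and>
          inQ s' \<and> s' \<noteq> s0 \<and> parents s1 = {s0, s'}"
  obtain s0 s1 s' where x: "x = (s0, s1, s')" by (cases x) auto
  have h1: "s0 \<noteq> s1" "{s0, s1} = {sA, sC}" "s' \<noteq> s0" "parents s1 = {s0, s'}"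
    using h parents_ss[OF ss_n11] unfolding x by auto
  have "s1 \<noteq> sA"
  proof
    assume "s1 = sA"
    then have "s0 = sC" using h1(1,2) by (auto simp: doubleton_eq_iff)
    then have "sC \<in> parents sA" using h1(4) \<open>s1 = sA\<close> by simp
    then have "qsize sC < qsize sA" using parents_small inQ_A by blast
    then show False using ord a0 b0 c0 d0 by (simp add: qsize_def sA_def sC_def)
  qed
  then have "s1 = sC" "s0 = sA" using h1(1,2) by (auto simp: doubleton_eq_iff)
  then have "{sA, s'} = {sA, sD}" using h1(4) parents_C by simp
  then have "s' = sD" using h1(3) \<open>s0 = sA\<close> by (auto simp: doubleton_eq_iff)
  then show "x = (sA, sC, sD)" using x \<open>s1 = sC\<close> \<open>s0 = sA\<close> by simp
qed

lemma Ffun_ss: "Ffun ss = (\<lambda>u. conv (conv (Ffun sA) (Ffun sC)) (ind Lam) u - Ffun sD u)"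
proof -
  have nb: "\<not> (ss = (0,1) \<or> ss = (1,1) \<or> ss = (1,0))" using ss_pos ss_n11 by auto
  have sz: "qsize sA < qsize ss" "qsize sC < qsize ss" "qsize sD < qsize ss"
    using sizes_pos a0 b0 c0 d0 ac bd by (auto simp: qsize_def sA_def sC_def sD_def ss_def)
  show ?thesis
    by (subst Ffun.simps, subst if_not_P[OF nb]) (simp add: labels_ss sz Let_def del: Ffun.simps)
qed

end


definition supp :: "(int \<times> int \<Rightarrow> int) \<Rightarrow> (int \<times> int) set" where
  "supp F = {x. F x \<noteq> 0}"

lemma conv_finite:
  assumes "finite S" "supp F \<subseteq> S"
  shows "conv F G u = (\<Sum>x\<in>S. F x * G (u - x))"
  unfolding conv_def
  by (rule sum.mono_neutral_left) (use assms in \<open>auto simp: supp_def\<close>)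

lemma conv_alt:
  assumes fF: "finite (supp F)" and fT: "finite T" and sG: "supp G \<subseteq> T"
  shows "conv F G u = (\<Sum>y\<in>T. F (u - y) * G y)"
proof -
  define I where "I = (\<lambda>x. u - x) ` supp F"
  have fI: "finite I" using fF by (simp add: I_def)
  have inj: "inj_on (\<lambda>x. u - x) (supp F)" by (rule inj_onI) simp
  have "conv F G u = (\<Sum>x\<in>supp F. F x * G (u - x))" by (simp add: conv_def supp_def)
  also have "\<dots> = (\<Sum>y\<in>I. F (u - y) * G y)"
    unfolding I_def by (subst sum.reindex[OF inj]) simp
  also have "\<dots> = (\<Sum>y\<in>I \<union> T. F (u - y) * G y)"
  proof (rule sum.mono_neutral_left)
    show "\<forall>y\<in>I \<union> T - I. F (u - y) * G y = 0"
    proof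
      fix y assume y: "y \<in> I \<union> T - I"
      have "F (u - y) = 0"
      proof (rule ccontr)
        assume "F (u - y) \<noteq> 0"
        then have "u - (u - y) \<in> I" unfolding I_def supp_def by blast
        then show False using y by simp
      qed
      then show "F (u - y) * G y = 0" by simp
    qed
  qed (use fI fT in auto)
  also have "\<dots> = (\<Sum>y\<in>T. F (u - y) * G y)"
  proof (rule sum.mono_neutral_right)
    show "\<forall>y\<in>I \<union> T - T. F (u - y) * G y = 0"
    proof
      fix y assume "y \<in> I \<union> T - T"
      then have "G y = 0" using sG by (auto simp: supp_def)
      then show "F (u - y) * G y = 0" by simp
    qed
  qed (use fI fT in auto)
  finally show ?thesis .
qed

lemma supp_conv:
  assumes "finite A" "finite C" "supp F \<subseteq> A" "supp G \<subseteq> C"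
  shows "supp (conv F G) \<subseteq> (\<lambda>(x,y). x + y) ` (A \<times> C)"
proof
  fix w assume "w \<in> supp (conv F G)"
  then have "conv F G w \<noteq> 0" by (simp add: supp_def)
  then have "(\<Sum>x\<in>A. F x * G (w - x)) \<noteq> 0" using conv_finite[OF assms(1,3)] by simp
  have "\<exists>x\<in>A. F x * G (w - x) \<noteq> 0"
  proof (rule ccontr)
    assume "\<not> ?thesis"
    then have "(\<Sum>x\<in>A. F x * G (w - x)) = 0" by (intro sum.neutral) auto
    then show False using \<open>(\<Sum>x\<in>A. F x * G (w - x)) \<noteq> 0\<close> by simp
  qed
  then obtain x where x: "x \<in> A" "F x * G (w - x) \<noteq> 0" by blast
  then have "w - x \<in> C" using assms(4) by (auto simp: supp_def)
  then show "w \<in> (\<lambda>(x,y). x + y) ` (A \<times> C)" using x(1) by (auto intro!: image_eqI[of _ _ "(x, w - x)"])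
qed

lemma H_formula:
  assumes "finite A" "finite C" "supp F \<subseteq> A" "supp G \<subseteq> C"
  shows "conv (conv F G) (ind Lam) u = (\<Sum>l\<in>Lam. \<Sum>x\<in>A. F x * G (u - l - x))"
proof -
  have fS: "finite (supp (conv F G))"
    by (rule finite_subset[OF supp_conv[OF assms]]) (use assms(1,2) in simp)
  have sL: "supp (ind Lam) \<subseteq> Lam" by (auto simp: supp_def ind_def)
  have fL: "finite Lam" by (simp add: Lam_def)
  have "conv (conv F G) (ind Lam) u = (\<Sum>l\<in>Lam. conv F G (u - l) * ind Lam l)"
    by (rule conv_alt[OF fS fL sL])
  also have "\<dots> = (\<Sum>l\<in>Lam. conv F G (u - l))" by (simp add: ind_def)
  also have "\<dots> = (\<Sum>l\<in>Lam. \<Sum>x\<in>A. F x * G (u - l - x))"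
    using conv_finite[OF assms(1,3)] by simp
  finally show ?thesis .
qed

lemma H_single:
  assumes "finite A" "finite C" "supp F \<subseteq> A" "supp G \<subseteq> C" "l0 \<in> Lam"
    and uq: "\<And>x l. x \<in> A \<Longrightarrow> l \<in> Lam \<Longrightarrow> u - l - x \<in> C \<Longrightarrow> x = x0 \<and> l = l0"
  shows "conv (conv F G) (ind Lam) u = F x0 * G (u - l0 - x0)"
proof -
  define V where "V = F x0 * G (u - l0 - x0)"
  have t: "F x * G (u - l - x) = (if l = l0 then (if x = x0 then V else 0) else 0)"
    if "x \<in> A" "l \<in> Lam" for x l
  proof (cases "u - l - x \<in> C")
    case True then show ?thesis using uq[OF that True] by (simp add: V_def)
  next
    case False then have "G (u - l - x) = 0" using assms(4) by (auto simp: supp_def)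
    show ?thesis
    proof (cases "l = l0 \<and> x = x0")
      case True
      then have "V = F x * G (u - l - x)" by (simp add: V_def)
      then show ?thesis using True \<open>G (u - l - x) = 0\<close> by simp
    next
      case False
      then show ?thesis using \<open>G (u - l - x) = 0\<close> by auto
    qed
  qed
  have fL: "finite Lam" by (simp add: Lam_def)
  have "conv (conv F G) (ind Lam) u = (\<Sum>l\<in>Lam. \<Sum>x\<in>A. F x * G (u - l - x))"
    by (rule H_formula[OF assms(1-4)])
  also have "\<dots> = (\<Sum>l\<in>Lam. \<Sum>x\<in>A. (if l = l0 then (if x = x0 then V else 0) else 0))"
    using t by (intro sum.cong refl) auto
  also have "\<dots> = (\<Sum>l\<in>Lam. (if l = l0 then (\<Sum>x\<in>A. (if x = x0 then V else 0)) else 0))"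
    by (intro sum.cong refl) auto
  also have "\<dots> = (\<Sum>x\<in>A. (if x = x0 then V else 0))"
    using sum.delta[OF fL, of l0 "\<lambda>_. \<Sum>x\<in>A. (if x = x0 then V else 0)"] assms(5) by simp
  also have "\<dots> = (if x0 \<in> A then V else 0)"
    using sum.delta[OF assms(1), of x0 "\<lambda>_. V"] by simp
  also have "\<dots> = V"
    using assms(3) by (auto simp: supp_def V_def)
  finally show ?thesis unfolding V_def .
qed

lemma H_zero:
  assumes "finite A" "finite C" "supp F \<subseteq> A" "supp G \<subseteq> C"
    and no: "\<And>x l. x \<in> A \<Longrightarrow> l \<in> Lam \<Longrightarrow> u - l - x \<notin> C"
  shows "conv (conv F G) (ind Lam) u = 0"
proof -
  have "conv (conv F G) (ind Lam) u = (\<Sum>l\<in>Lam. \<Sum>x\<in>A. F x * G (u - l - x))"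
    by (rule H_formula[OF assms(1-4)])
  also have "\<dots> = 0"
  proof (intro sum.neutral ballI)
    fix l x assume "l \<in> Lam" "x \<in> A"
    then have "u - l - x \<notin> C" using no by blast
    then have "G (u - l - x) = 0" using assms(4) by (auto simp: supp_def)
    then show "F x * G (u - l - x) = 0" by simp
  qed
  finally show ?thesis .
qed


definition JI :: "int \<Rightarrow> int \<Rightarrow> (int \<times> int) set" where
  "JI q p = {(x1, x2). 2 dvd (x1 - q) \<and> 2 dvd (x2 - p) \<and> -q \<le> x1 \<and> -p \<le> x2
     \<and> x1 + x2 \<le> p + q - 2 \<and> 0 \<le> p * x1 + q * x2}"

lemma JI_iff: "(x1, x2) \<in> JI q p \<longleftrightarrow> 2 dvd (x1 - q) \<and> 2 dvd (x2 - p) \<and> -q \<le> x1 \<and> -p \<le> x2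
     \<and> x1 + x2 \<le> p + q - 2 \<and> 0 \<le> p * x1 + q * x2"
  by (simp add: JI_def)

lemma Jset_JI: "Jset s = JI (int (fst s)) (int (snd s))"
  unfolding Jset_def JI_def Let_def by (auto simp: mod_eq_dvd_iff)

lemma finite_JI: "finite (JI q p)"
proof -
  have "JI q p \<subseteq> {-q..2*p+q} \<times> {-p..p+2*q}" by (auto simp: JI_def)
  then show ?thesis by (rule finite_subset) simp
qed

lemma Lam_cases: "l \<in> Lam \<Longrightarrow> l = (0,0) \<or> l = (0,2) \<or> l = (2,0)"
  by (auto simp: Lam_def)

lemma minX:
  fixes a b c d x1 x2 :: int
  assumes nn: "a \<ge> 0" "b \<ge> 0" "c \<ge> 0" "d \<ge> 0" and det: "a*d - b*c = 1 \<or> a*d - b*c = -1"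
    and J: "(x1, x2) \<in> JI a b"
  shows "(b+d)*x1 + (a+c)*x2 \<ge> -1 \<and>
    ((b+d)*x1 + (a+c)*x2 = -1 \<longrightarrow> (x1, x2) = (if a*d - b*c = 1 then (-a, b) else (a, -b)))"
proof -
  define l where "l = (b+d)*x1 + (a+c)*x2"
  define L0 where "L0 = b*x1 + a*x2"
  have L0: "L0 \<ge> 0" "x1 + a \<ge> 0" "x2 + b \<ge> 0" using J by (auto simp: JI_iff L0_def)
  show ?thesis
  proof (cases "a*d - b*c = 1")
    case True
    have a1: "a > 0"
    proof (rule ccontr)
      assume "\<not> a > 0" then have "a = 0" using nn by simp
      then show False using True nn mult_nonneg_nonneg[of b c] by simp
    qed
    have id: "a*(l+1) = (a+c)*L0 + (x1+a) + x1*(a*d - b*c - 1)"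
      by (simp add: l_def L0_def algebra_simps)
    then have id': "a*(l+1) = (a+c)*L0 + (x1+a)" using True by simp
    have "(a+c)*L0 \<ge> 0" using L0 nn by simp
    then have "a*(l+1) \<ge> 0" using id' L0 by linarith
    then have ge: "l + 1 \<ge> 0" using a1 by (simp add: zero_le_mult_iff)
    have eq: "(x1, x2) = (-a, b)" if "l = -1"
    proof -
      have "(a+c)*L0 + (x1+a) = 0" using id' that by simp
      moreover have "(a+c)*L0 \<ge> 0" using L0 nn by simp
      ultimately have "x1 + a = 0" "(a+c)*L0 = 0" using L0 by linarith+
      then have x1: "x1 = -a" and "L0 = 0" using a1 nn by auto
      then have "a * (x2 - b) = 0" unfolding L0_def by (simp add: algebra_simps)
      then have "x2 = b" using a1 by simp
      then show ?thesis using x1 by simp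
    qed
    show ?thesis using ge eq True unfolding l_def by auto
  next
    case False
    then have F: "a*d - b*c = -1" using det by simp
    have b1: "b > 0"
    proof (rule ccontr)
      assume "\<not> b > 0" then have "b = 0" using nn by simp
      then show False using F nn mult_nonneg_nonneg[of a d] by simp
    qed
    have id: "b*(l+1) = (b+d)*L0 + (x2+b) - x2*(a*d - b*c + 1)"
      by (simp add: l_def L0_def algebra_simps)
    then have id': "b*(l+1) = (b+d)*L0 + (x2+b)" using F by simp
    have "(b+d)*L0 \<ge> 0" using L0 nn by simp
    then have "b*(l+1) \<ge> 0" using id' L0 by linarith
    then have ge: "l + 1 \<ge> 0" using b1 by (simp add: zero_le_mult_iff)
    have eq: "(x1, x2) = (a, -b)" if "l = -1"
    proof -
      have "(b+d)*L0 + (x2+b) = 0" using id' that by simp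
      moreover have "(b+d)*L0 \<ge> 0" using L0 nn by simp
      ultimately have "x2 + b = 0" "(b+d)*L0 = 0" using L0 by linarith+
      then have x2: "x2 = -b" and "L0 = 0" using b1 nn by auto
      then have "b * (x1 - a) = 0" unfolding L0_def by (simp add: algebra_simps)
      then have "x1 = a" using b1 by simp
      then show ?thesis using x2 by simp
    qed
    show ?thesis using ge eq F unfolding l_def by auto
  qed
qed

lemma oddX:
  fixes a b c d x1 x2 :: int
  assumes det: "a*d - b*c = 1 \<or> a*d - b*c = -1" and J: "(x1, x2) \<in> JI a b"
  shows "odd ((b+d)*x1 + (a+c)*x2)"
proof -
  have "\<exists>k. x1 - a = 2*k" "\<exists>k. x2 - b = 2*k" using J unfolding JI_iff dvd_def by blast+
  then obtain k k' where k0: "x1 - a = 2*k" and k0': "x2 - b = 2*k'" by blast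
  have k: "x1 = a + 2*k" and k': "x2 = b + 2*k'" using k0 k0' by linarith+
  define X where "X = a*b + b*c + (b+d)*k + (a+c)*k'"
  have e: "(b+d)*x1 + (a+c)*x2 = (a*d - b*c) + 2*X"
    unfolding k k' X_def by (simp add: algebra_simps)
  show ?thesis
  proof (cases "a*d - b*c = 1")
    case True
    then have "(b+d)*x1 + (a+c)*x2 = 2*X + 1" using e by simp
    then show ?thesis by simp
  next
    case False
    then have "(b+d)*x1 + (a+c)*x2 = 2*(X - 1) + 1" using e det by simp
    then show ?thesis by simp
  qed
qed

lemma minD:
  fixes a b c d x1 x2 :: int
  assumes nn: "a \<ge> 0" "b \<ge> 0" "c \<ge> 0" "d \<ge> 0" and det: "a*d - b*c = 1 \<or> a*d - b*c = -1"
    and ac: "a \<le> c" and bd: "b \<le> d"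
    and J: "(x1, x2) \<in> JI (c - a) (d - b)"
  shows "(b+d)*x1 + (a+c)*x2 \<ge> -2 \<and>
    ((b+d)*x1 + (a+c)*x2 = -2 \<longrightarrow> (x1, x2) = (if a*d - b*c = 1 then (c - a, b - d) else (a - c, d - b)))"
proof -
  define l where "l = (b+d)*x1 + (a+c)*x2"
  define m where "m = c - a"
  define n where "n = d - b"
  define L0 where "L0 = n*x1 + m*x2"
  have L0: "L0 \<ge> 0" "x1 + m \<ge> 0" "x2 + n \<ge> 0" using J by (auto simp: JI_iff L0_def m_def n_def)
  have mn: "m \<ge> 0" "n \<ge> 0" using ac bd by (auto simp: m_def n_def)
  show ?thesis
  proof (cases "a*d - b*c = 1")
    case True
    have n1: "n > 0"
    proof (rule ccontr)
      assume "\<not> n > 0" then have "d = b" using mn by (simp add: n_def)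
      then have "b * (a - c) = 1" using True by (simp add: algebra_simps)
      moreover have "b * (a - c) \<le> 0" using nn ac by (simp add: mult_nonneg_nonpos)
      ultimately show False by simp
    qed
    have id: "n*(l+2) = (b+d)*L0 + 2*(x2+n) + x2*(2*(a*d - b*c) - 2)"
      by (simp add: l_def L0_def m_def n_def algebra_simps)
    then have id': "n*(l+2) = (b+d)*L0 + 2*(x2+n)" using True by simp
    have "(b+d)*L0 \<ge> 0" using L0 nn by simp
    moreover have "2*(x2+n) \<ge> 0" using L0 by simp
    ultimately have "n*(l+2) \<ge> 0" using id' by linarith
    then have ge: "l + 2 \<ge> 0" using n1 by (simp add: zero_le_mult_iff)
    have eq: "(x1, x2) = (c - a, b - d)" if "l = -2"
    proof -
      have "(b+d)*L0 + 2*(x2+n) = 0" using id' that by simp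
      moreover have "(b+d)*L0 \<ge> 0" using L0 nn by simp
      moreover have "2*(x2+n) \<ge> 0" using L0 by simp
      ultimately have "2*(x2 + n) = 0" "(b+d)*L0 = 0" by linarith+
      then have "x2 + n = 0" "(b+d)*L0 = 0" by simp_all
      moreover have "b + d > 0" using n1 nn by (simp add: n_def)
      ultimately have x2: "x2 = -n" and "L0 = 0" by auto
      then have "n * (x1 - m) = 0" unfolding L0_def by (simp add: algebra_simps)
      then have "x1 = m" using n1 by simp
      then show ?thesis using x2 by (simp add: m_def n_def)
    qed
    show ?thesis using ge eq True unfolding l_def by auto
  next
    case False
    then have F: "a*d - b*c = -1" using det by simp
    have m1: "m > 0"
    proof (rule ccontr)
      assume "\<not> m > 0" then have "c = a" using mn by (simp add: m_def)
      then have "a * (d - b) = -1" using F by (simp add: algebra_simps)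
      moreover have "a * (d - b) \<ge> 0" using nn bd by simp
      ultimately show False by simp
    qed
    have id: "m*(l+2) = (a+c)*L0 + 2*(x1+m) - x1*(2*(a*d - b*c) + 2)"
      by (simp add: l_def L0_def m_def n_def algebra_simps)
    then have id': "m*(l+2) = (a+c)*L0 + 2*(x1+m)" using F by simp
    have "(a+c)*L0 \<ge> 0" using L0 nn by simp
    moreover have "2*(x1+m) \<ge> 0" using L0 by simp
    ultimately have "m*(l+2) \<ge> 0" using id' by linarith
    then have ge: "l + 2 \<ge> 0" using m1 by (simp add: zero_le_mult_iff)
    have eq: "(x1, x2) = (a - c, d - b)" if "l = -2"
    proof -
      have "(a+c)*L0 + 2*(x1+m) = 0" using id' that by simp
      moreover have "(a+c)*L0 \<ge> 0" using L0 nn by simp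
      moreover have "2*(x1+m) \<ge> 0" using L0 by simp
      ultimately have "2*(x1 + m) = 0" "(a+c)*L0 = 0" by linarith+
      then have "x1 + m = 0" "(a+c)*L0 = 0" by simp_all
      moreover have "a + c > 0" using m1 nn by (simp add: m_def)
      ultimately have x1: "x1 = -m" and "L0 = 0" by auto
      then have "m * (x2 - n) = 0" unfolding L0_def by (simp add: algebra_simps)
      then have "x2 = n" using m1 by simp
      then show ?thesis using x1 by (simp add: m_def n_def)
    qed
    show ?thesis using ge eq F unfolding l_def by auto
  qed
qed

lemma evenD:
  fixes a b c d x1 x2 :: int
  assumes det: "a*d - b*c = 1 \<or> a*d - b*c = -1" and J: "(x1, x2) \<in> JI (c - a) (d - b)"
  shows "even ((b+d)*x1 + (a+c)*x2)"
proof -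
  have "\<exists>k. x1 - (c - a) = 2*k" "\<exists>k. x2 - (d - b) = 2*k" using J unfolding JI_iff dvd_def by blast+
  then obtain k k' where k0: "x1 - (c - a) = 2*k" and k0': "x2 - (d - b) = 2*k'" by blast
  have k: "x1 = c - a + 2*k" and k': "x2 = d - b + 2*k'" using k0 k0' by linarith+
  have "(b+d)*x1 + (a+c)*x2 = 2*((c*d - a*b) + (b+d)*k + (a+c)*k')"
    unfolding k k' by (simp add: algebra_simps)
  then show ?thesis by simp
qed


lemma pair_diff3: "((k1::int), (k2::int)) - (l1, l2) - (x1, x2) = (k1 - l1 - x1, k2 - l2 - x2)"
  by simp

lemma cornerP0:
  fixes a b c d :: int
  assumes nn: "a \<ge> 0" "b \<ge> 0" "c \<ge> 0" "d \<ge> 0" and det: "a*d - b*c = 1 \<or> a*d - b*c = -1"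
    and bd: "b \<le> d"
    and x: "x \<in> JI a b" and l: "l \<in> Lam" and y: "(a+c, -(b+d)) - l - x \<in> JI c d"
  shows "x = (if b = 0 then (-a, b) else (a, -b)) \<and> l = (if b = 0 then (2,0) else (0,0))"
proof -
  obtain x1 x2 where xx: "x = (x1, x2)" by (cases x)
  obtain l1 l2 where ll: "l = (l1, l2)" by (cases l)
  have X: "2 dvd (x1 - a)" "2 dvd (x2 - b)" "-a \<le> x1" "-b \<le> x2" "x1 + x2 \<le> b + a - 2" "0 \<le> b * x1 + a * x2"
    using x unfolding xx JI_iff by auto
  define y1 where "y1 = a + c - l1 - x1"
  define y2 where "y2 = -(b+d) - l2 - x2"
  have Y: "-c \<le> y1" "-d \<le> y2" "y1 + y2 \<le> d + c - 2" "0 \<le> d * y1 + c * y2"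
    using y unfolding xx ll pair_diff3 JI_iff y1_def y2_def by auto
  have L: "(l1 = 0 \<and> l2 = 0) \<or> (l1 = 0 \<and> l2 = 2) \<or> (l1 = 2 \<and> l2 = 0)" using Lam_cases[OF l] ll by auto
  have d1: "d > 0"
  proof (rule ccontr)
    assume "\<not> d > 0" then have "d = 0" "b = 0" using nn bd by auto
    then show False using det by simp
  qed
  have x2: "x2 = -b" and l2: "l2 = 0" using X(4) Y(2) L unfolding y2_def by auto
  have y2: "y2 = -d" using x2 l2 by (simp add: y2_def)
  have "d * (y1 - c) \<ge> 0" using Y(4) y2 by (simp add: algebra_simps)
  then have y1c: "y1 \<ge> c" using d1 by (simp add: zero_le_mult_iff)
  show ?thesis
  proof (cases "b = 0")
    case True
    then have "a * d = 1 \<or> a * d = -1" using det by simp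
    then have ad: "a = 1" "d = 1" using nn int_unit_prod[of a d] by auto
    have x1: "x1 = -1" using X(3,5) x2 True ad by simp
    have "y1 \<le> c" using Y(3) y2 ad by simp
    then have "y1 = c" using y1c by simp
    then have "l1 = 2" using x1 ad unfolding y1_def by simp
    then show ?thesis using True xx ll x1 x2 l2 ad by simp
  next
    case False
    then have b1: "b > 0" using nn by simp
    have "b * (x1 - a) \<ge> 0" using X(6) x2 by (simp add: algebra_simps)
    then have x1a: "x1 \<ge> a" using b1 by (simp add: zero_le_mult_iff)
    have "l1 \<ge> 0" using L by auto
    then have "x1 = a" "l1 = 0" using x1a y1c unfolding y1_def by auto
    then show ?thesis using False xx ll x2 l2 by simp
  qed
qed

lemma cornerP1:
  fixes a b c d :: int
  assumes nn: "a \<ge> 0" "b \<ge> 0" "c \<ge> 0" "d \<ge> 0"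
    and x: "x \<in> JI a b" and l: "l \<in> Lam"
    and y: "(a + c + 2*(b+d) - 2, -(b+d)) - l - x \<in> JI c d"
  shows "x = (a + 2*b - 2, -b) \<and> l = (2,0)"
proof -
  obtain x1 x2 where xx: "x = (x1, x2)" by (cases x)
  obtain l1 l2 where ll: "l = (l1, l2)" by (cases l)
  have X: "-b \<le> x2" "x1 + x2 \<le> b + a - 2"
    using x unfolding xx JI_iff by auto
  define y1 where "y1 = a + c + 2*(b+d) - 2 - l1 - x1"
  define y2 where "y2 = -(b+d) - l2 - x2"
  have Y: "-d \<le> y2" "y1 + y2 \<le> d + c - 2"
    using y unfolding xx ll pair_diff3 JI_iff y1_def y2_def by auto
  have L: "(l1 = 0 \<and> l2 = 0) \<or> (l1 = 0 \<and> l2 = 2) \<or> (l1 = 2 \<and> l2 = 0)" using Lam_cases[OF l] ll by auto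
  have x2: "x2 = -b" and l2: "l2 = 0" using X(1) Y(1) L unfolding y2_def by auto
  have "l1 = 2" "x1 = a + 2*b - 2" using X(2) Y(2) L x2 l2 unfolding y1_def y2_def by auto
  then show ?thesis using xx ll x2 l2 by simp
qed

lemma cornerQ0:
  fixes a b c d :: int
  assumes nn: "a \<ge> 0" "b \<ge> 0" "c \<ge> 0" "d \<ge> 0" and det: "a*d - b*c = 1 \<or> a*d - b*c = -1"
    and ac: "a \<le> c"
    and x: "x \<in> JI a b" and l: "l \<in> Lam" and y: "(-(a+c), b+d) - l - x \<in> JI c d"
  shows "x = (if a = 0 then (a, -b) else (-a, b)) \<and> l = (if a = 0 then (0,2) else (0,0))"
proof -
  obtain x1 x2 where xx: "x = (x1, x2)" by (cases x)
  obtain l1 l2 where ll: "l = (l1, l2)" by (cases l)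
  have X: "-a \<le> x1" "-b \<le> x2" "x1 + x2 \<le> b + a - 2" "0 \<le> b * x1 + a * x2"
    using x unfolding xx JI_iff by auto
  define y1 where "y1 = -(a+c) - l1 - x1"
  define y2 where "y2 = b + d - l2 - x2"
  have Y: "-c \<le> y1" "-d \<le> y2" "y1 + y2 \<le> d + c - 2" "0 \<le> d * y1 + c * y2"
    using y unfolding xx ll pair_diff3 JI_iff y1_def y2_def by auto
  have L: "(l1 = 0 \<and> l2 = 0) \<or> (l1 = 0 \<and> l2 = 2) \<or> (l1 = 2 \<and> l2 = 0)" using Lam_cases[OF l] ll by auto
  have c1: "c > 0"
  proof (rule ccontr)
    assume "\<not> c > 0" then have "c = 0" "a = 0" using nn ac by auto
    then show False using det by simp
  qed
  have x1: "x1 = -a" and l1: "l1 = 0" using X(1) Y(1) L unfolding y1_def by auto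
  have y1: "y1 = -c" using x1 l1 by (simp add: y1_def)
  have "c * (y2 - d) \<ge> 0" using Y(4) y1 by (simp add: algebra_simps)
  then have y2d: "y2 \<ge> d" using c1 by (simp add: zero_le_mult_iff)
  show ?thesis
  proof (cases "a = 0")
    case True
    then have "b * c = 1 \<or> b * c = -1" using det by auto
    then have bc: "b = 1" "c = 1" using nn int_unit_prod[of b c] by auto
    have x2: "x2 = -1" using X(2,3) x1 True bc by simp
    have "y2 \<le> d" using Y(3) y1 bc by simp
    then have "y2 = d" using y2d by simp
    then have "l2 = 2" using x2 bc unfolding y2_def by simp
    then show ?thesis using True xx ll x1 x2 l1 bc by simp
  next
    case False
    then have a1: "a > 0" using nn by simp
    have "a * (x2 - b) \<ge> 0" using X(4) x1 by (simp add: algebra_simps)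
    then have x2b: "x2 \<ge> b" using a1 by (simp add: zero_le_mult_iff)
    have "l2 \<ge> 0" using L by auto
    then have "x2 = b" "l2 = 0" using x2b y2d unfolding y2_def by auto
    then show ?thesis using False xx ll x1 l1 by simp
  qed
qed

lemma cornerQ1:
  fixes a b c d :: int
  assumes nn: "a \<ge> 0" "b \<ge> 0" "c \<ge> 0" "d \<ge> 0"
    and x: "x \<in> JI a b" and l: "l \<in> Lam"
    and y: "(-(a+c), b + d + 2*(a+c) - 2) - l - x \<in> JI c d"
  shows "x = (-a, b + 2*a - 2) \<and> l = (0,2)"
proof -
  obtain x1 x2 where xx: "x = (x1, x2)" by (cases x)
  obtain l1 l2 where ll: "l = (l1, l2)" by (cases l)
  have X: "-a \<le> x1" "x1 + x2 \<le> b + a - 2"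
    using x unfolding xx JI_iff by auto
  define y1 where "y1 = -(a+c) - l1 - x1"
  define y2 where "y2 = b + d + 2*(a+c) - 2 - l2 - x2"
  have Y: "-c \<le> y1" "y1 + y2 \<le> d + c - 2"
    using y unfolding xx ll pair_diff3 JI_iff y1_def y2_def by auto
  have L: "(l1 = 0 \<and> l2 = 0) \<or> (l1 = 0 \<and> l2 = 2) \<or> (l1 = 2 \<and> l2 = 0)" using Lam_cases[OF l] ll by auto
  have x1: "x1 = -a" and l1: "l1 = 0" using X(1) Y(1) L unfolding y1_def by auto
  have "l2 = 2" "x2 = b + 2*a - 2" using X(2) Y(2) L x1 l1 unfolding y1_def y2_def by auto
  then show ?thesis using xx ll x1 l1 by simp
qed


lemma ext_intro:
  assumes "x \<in> Jset t"
    "x = Ppt t 0 \<or> x = Ppt t (int (snd t) - 1) \<or> x = Qpt t 0 \<or> x = Qpt t (int (fst t) - 1)"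
  shows "x \<in> extremal t"
  using assms unfolding extremal_def by auto

context fpo
begin

lemma JsA: "Jset sA = JI a b" using a0 b0 by (simp add: Jset_JI sA_def)
lemma JsC: "Jset sC = JI c d" using c0 d0 by (simp add: Jset_JI sC_def)
lemma JsD: "Jset sD = JI (c - a) (d - b)" using ac bd by (simp add: Jset_JI sD_def)
lemma Jss: "Jset ss = JI (a + c) (b + d)" using a0 b0 c0 d0 by (simp add: Jset_JI ss_def)

lemma PQ_A: "Ppt sA i = (a + 2*i, -b)" "Qpt sA i = (-a, b + 2*i)" "int (fst sA) = a" "int (snd sA) = b"
  using a0 b0 by (simp_all add: Ppt_def Qpt_def sA_def)
lemma PQ_C: "Ppt sC i = (c + 2*i, -d)" "Qpt sC i = (-c, d + 2*i)" "int (fst sC) = c" "int (snd sC) = d"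
  using c0 d0 by (simp_all add: Ppt_def Qpt_def sC_def)
lemma PQ_D: "Ppt sD i = (c - a + 2*i, -(d - b))" "Qpt sD i = (-(c - a), d - b + 2*i)"
  using ac bd by (simp_all add: Ppt_def Qpt_def sD_def)
lemma PQ_S: "Ppt ss i = (a + c + 2*i, -(b + d))" "Qpt ss i = (-(a + c), b + d + 2*i)"
    "int (fst ss) = a + c" "int (snd ss) = b + d"
  using a0 b0 c0 d0 by (simp_all add: Ppt_def Qpt_def ss_def)

lemma ext_ss: "extremal ss = {(a + c, -(b + d)), (a + c + 2*(b+d) - 2, -(b + d)),
    (-(a + c), b + d), (-(a + c), b + d + 2*(a+c) - 2)}"
proof -
  have "\<not> (ss = (0,1) \<or> ss = (1,0))" using ss_pos by auto
  then show ?thesis unfolding extremal_def using PQ_S by (simp add: algebra_simps)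
qed

lemma eps_facts:
  "a*d - b*c = 1 \<Longrightarrow> a > 0 \<and> d > 0 \<and> d - b > 0"
  "a*d - b*c = -1 \<Longrightarrow> b > 0 \<and> c > 0 \<and> c - a > 0"
proof -
  assume e: "a*d - b*c = 1"
  have "a > 0"
  proof (rule ccontr)
    assume "\<not> a > 0" then have "a = 0" using a0 by simp
    then show False using e b0 c0 mult_nonneg_nonneg[of b c] by simp
  qed
  moreover have "d > 0"
  proof (rule ccontr)
    assume "\<not> d > 0" then have "d = 0" using d0 by simp
    then show False using e b0 c0 mult_nonneg_nonneg[of b c] by simp
  qed
  moreover have "d - b > 0"
  proof (rule ccontr)
    assume "\<not> d - b > 0" then have "d = b" using bd by simp
    then have "b * (a - c) = 1" using e by (simp add: algebra_simps)
    moreover have "b * (a - c) \<le> 0" using b0 ac by (simp add: mult_nonneg_nonpos)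
    ultimately show False by simp
  qed
  ultimately show "a > 0 \<and> d > 0 \<and> d - b > 0" by simp
next
  assume e: "a*d - b*c = -1"
  have "b > 0"
  proof (rule ccontr)
    assume "\<not> b > 0" then have "b = 0" using b0 by simp
    then show False using e a0 d0 mult_nonneg_nonneg[of a d] by simp
  qed
  moreover have "c > 0"
  proof (rule ccontr)
    assume "\<not> c > 0" then have "c = 0" using c0 by simp
    then show False using e a0 d0 mult_nonneg_nonneg[of a d] by simp
  qed
  moreover have "c - a > 0"
  proof (rule ccontr)
    assume "\<not> c - a > 0" then have "c = a" using ac by simp
    then have "a * (d - b) = -1" using e by (simp add: algebra_simps)
    moreover have "a * (d - b) \<ge> 0" using a0 bd by simp
    ultimately show False by simp
  qed
  ultimately show "b > 0 \<and> c > 0 \<and> c - a > 0" by simp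
qed

definition "xmin = (if a*d - b*c = 1 then (-a, b) else (a, -b))"
definition "ymin = (if a*d - b*c = 1 then (c, -d) else (-c, d))"
definition "u0 = (if a*d - b*c = 1 then (c - a, b - d) else (a - c, d - b))"

lemma u0_sum: "u0 = xmin + ymin"
  by (simp add: u0_def xmin_def ymin_def)

lemma xmin_J: "xmin \<in> JI a b"
proof (cases "a*d - b*c = 1")
  case True then show ?thesis using eps_facts(1)[OF True] b0 by (simp add: xmin_def JI_iff)
next
  case False then have F: "a*d - b*c = -1" using det by simp
  show ?thesis using eps_facts(2)[OF F] a0 False by (simp add: xmin_def JI_iff)
qed

lemma ymin_J: "ymin \<in> JI c d"
proof (cases "a*d - b*c = 1")
  case True then show ?thesis using eps_facts(1)[OF True] c0 by (simp add: ymin_def JI_iff)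
next
  case False then have F: "a*d - b*c = -1" using det by simp
  show ?thesis using eps_facts(2)[OF F] d0 False by (simp add: ymin_def JI_iff)
qed

lemma u0_J: "u0 \<in> JI (c - a) (d - b)"
proof (cases "a*d - b*c = 1")
  case True then show ?thesis using eps_facts(1)[OF True] ac by (simp add: u0_def JI_iff algebra_simps)
next
  case False then have F: "a*d - b*c = -1" using det by simp
  show ?thesis using eps_facts(2)[OF F] bd False by (simp add: u0_def JI_iff algebra_simps)
qed

lemma xmin_ext: "xmin \<in> extremal sA"
proof (rule ext_intro)
  show "xmin \<in> Jset sA" using xmin_J JsA by simp
  show "xmin = Ppt sA 0 \<or> xmin = Ppt sA (int (snd sA) - 1) \<or> xmin = Qpt sA 0 \<or> xmin = Qpt sA (int (fst sA) - 1)"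
    unfolding PQ_A(1,2) xmin_def by simp
qed

lemma ymin_ext: "ymin \<in> extremal sC"
proof (rule ext_intro)
  show "ymin \<in> Jset sC" using ymin_J JsC by simp
  show "ymin = Ppt sC 0 \<or> ymin = Ppt sC (int (snd sC) - 1) \<or> ymin = Qpt sC 0 \<or> ymin = Qpt sC (int (fst sC) - 1)"
    unfolding PQ_C(1,2) ymin_def by simp
qed

lemma u0_ext: "u0 \<in> extremal sD"
proof (rule ext_intro)
  show "u0 \<in> Jset sD" using u0_J JsD by simp
  show "u0 = Ppt sD 0 \<or> u0 = Ppt sD (int (snd sD) - 1) \<or> u0 = Qpt sD 0 \<or> u0 = Qpt sD (int (fst sD) - 1)"
    unfolding PQ_D(1,2) u0_def by simp
qed

definition "lf u = (b+d) * fst u + (a+c) * snd u"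

lemma lf_add: "lf (x + y) = lf x + lf y"
  by (simp add: lf_def algebra_simps)

lemma lf_A:
  assumes x: "x \<in> JI a b"
  shows "lf x \<ge> -1 \<and> odd (lf x) \<and> (lf x = -1 \<longrightarrow> x = xmin)"
proof -
  obtain x1 x2 where xx: "x = (x1, x2)" by (cases x)
  have e: "lf (x1, x2) = (b+d)*x1 + (a+c)*x2" by (simp add: lf_def)
  have m: "(b+d)*x1 + (a+c)*x2 \<ge> -1 \<and>
    ((b+d)*x1 + (a+c)*x2 = -1 \<longrightarrow> (x1, x2) = (if a*d - b*c = 1 then (-a, b) else (a, -b)))"
    by (rule minX[OF a0 b0 c0 d0 det]) (use x xx in simp)
  have o: "odd ((b+d)*x1 + (a+c)*x2)" by (rule oddX[OF det]) (use x xx in simp)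
  show ?thesis unfolding xx e xmin_def using m o by blast
qed

lemma lf_C:
  assumes y: "y \<in> JI c d"
  shows "lf y \<ge> -1 \<and> odd (lf y) \<and> (lf y = -1 \<longrightarrow> y = ymin)"
proof -
  obtain y1 y2 where yy: "y = (y1, y2)" by (cases y)
  have det': "c*b - d*a = 1 \<or> c*b - d*a = -1" using det by (auto simp: algebra_simps)
  have e: "lf (y1, y2) = (d+b)*y1 + (c+a)*y2" by (simp add: lf_def algebra_simps)
  have m: "(d+b)*y1 + (c+a)*y2 \<ge> -1 \<and>
    ((d+b)*y1 + (c+a)*y2 = -1 \<longrightarrow> (y1, y2) = (if c*b - d*a = 1 then (-c, d) else (c, -d)))"
    by (rule minX[OF c0 d0 a0 b0 det']) (use y yy in simp)
  have o: "odd ((d+b)*y1 + (c+a)*y2)" by (rule oddX[OF det']) (use y yy in simp)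
  have yd: "ymin = (if c*b - d*a = 1 then (-c, d) else (c, -d))"
  proof (cases "a*d - b*c = 1")
    case True
    then have "c*b - d*a \<noteq> 1" by (simp add: algebra_simps)
    then show ?thesis using True by (simp add: ymin_def)
  next
    case False
    then have "a*d - b*c = -1" using det by simp
    then have "c*b - d*a = 1" by (simp add: algebra_simps)
    then show ?thesis using False by (simp add: ymin_def)
  qed
  show ?thesis unfolding yy e yd using m o by blast
qed

lemma lf_D:
  assumes u: "u \<in> JI (c - a) (d - b)"
  shows "lf u \<ge> -2 \<and> even (lf u) \<and> (lf u = -2 \<longrightarrow> u = u0)"
proof -
  obtain u1 u2 where uu: "u = (u1, u2)" by (cases u)
  have e: "lf (u1, u2) = (b+d)*u1 + (a+c)*u2" by (simp add: lf_def)
  have m: "(b+d)*u1 + (a+c)*u2 \<ge> -2 \<and>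
    ((b+d)*u1 + (a+c)*u2 = -2 \<longrightarrow> (u1, u2) = (if a*d - b*c = 1 then (c - a, b - d) else (a - c, d - b)))"
    by (rule minD[OF a0 b0 c0 d0 det ac bd]) (use u uu in simp)
  have o: "even ((b+d)*u1 + (a+c)*u2)" by (rule evenD[OF det]) (use u uu in simp)
  show ?thesis unfolding uu e u0_def using m o by blast
qed

lemma lf_L:
  assumes l: "l \<in> Lam"
  shows "lf l \<ge> 0 \<and> even (lf l) \<and> (lf l < 2 \<longrightarrow> l = (0,0))"
proof -
  have "l = (0,0) \<or> l = (0,2) \<or> l = (2,0)" using Lam_cases[OF l] .
  moreover have "lf (0,0) = 0" "lf (0,2) = 2*(a+c)" "lf (2,0) = 2*(b+d)" by (simp_all add: lf_def)
  moreover have "a + c \<ge> 1" "b + d \<ge> 1" using q_pos p_pos by simp_all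
  ultimately show ?thesis by auto
qed

end


lemma pair_eq_sum: "(u::int\<times>int) - (0,0) - v = w \<Longrightarrow> u = v + w"
  by (cases u, cases v, cases w) auto

context fpo
begin

lemma lf_diff: "lf (x - y) = lf x - lf y"
  by (simp add: lf_def algebra_simps)

lemma tri:
  assumes x: "x \<in> JI a b" and l: "l \<in> Lam" and y: "u - l - x \<in> JI c d" and neg: "lf u < 0"
  shows "x = xmin \<and> l = (0,0) \<and> u - l - x = ymin"
proof -
  have uu: "u = x + (u - l - x) + l" by simp
  have s: "lf u = lf x + lf (u - l - x) + lf l" by (simp add: lf_diff)
  have A: "lf x \<ge> -1" "odd (lf x)" "lf x = -1 \<longrightarrow> x = xmin" using lf_A[OF x] by auto
  have C: "lf (u - l - x) \<ge> -1" "odd (lf (u - l - x))" "lf (u - l - x) = -1 \<longrightarrow> u - l - x = ymin"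
    using lf_C[OF y] by auto
  have L: "lf l \<ge> 0" "lf l < 2 \<longrightarrow> l = (0,0)" using lf_L[OF l] by auto
  have x1: "lf x = -1"
  proof (rule ccontr)
    assume "lf x \<noteq> -1"
    moreover have "lf x \<noteq> 0" using A(2) by auto
    ultimately have "lf x \<ge> 1" using A(1) by linarith
    then show False using s C(1) L(1) neg by linarith
  qed
  have y1: "lf (u - l - x) = -1"
  proof (rule ccontr)
    assume "lf (u - l - x) \<noteq> -1"
    moreover have "lf (u - l - x) \<noteq> 0" using C(2) by auto
    ultimately have "lf (u - l - x) \<ge> 1" using C(1) by linarith
    then show False using s A(1) L(1) neg by linarith
  qed
  have "lf l < 2" using s x1 y1 neg by linarith
  then show ?thesis using A(3) C(3) L(2) x1 y1 by simp
qed

lemma comb_supp: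
  fixes FA FC FD :: "int \<times> int \<Rightarrow> int"
  assumes sA: "supp FA \<subseteq> JI a b" and eA: "\<forall>x\<in>extremal sA. FA x = 1"
    and sC: "supp FC \<subseteq> JI c d" and eC: "\<forall>x\<in>extremal sC. FC x = 1"
    and sD: "supp FD \<subseteq> JI (c - a) (d - b)" and eD: "\<forall>x\<in>extremal sD. FD x = 1"
    and u: "conv (conv FA FC) (ind Lam) u - FD u \<noteq> 0"
  shows "u \<in> JI (a + c) (b + d)"
proof -
  obtain u1 u2 where uu: "u = (u1, u2)" by (cases u)
  have lfu: "lf (u1, u2) = (b+d)*u1 + (a+c)*u2" by (simp add: lf_def)
  have fA: "finite (JI a b)" and fC: "finite (JI c d)" by (simp_all add: finite_JI)
  show ?thesis
  proof (cases "\<exists>x\<in>JI a b. \<exists>l\<in>Lam. u - l - x \<in> JI c d")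
    case True
    then obtain x l where x: "x \<in> JI a b" and l: "l \<in> Lam" and y: "u - l - x \<in> JI c d" by blast
    obtain x1 x2 where xx: "x = (x1, x2)" by (cases x)
    obtain l1 l2 where ll: "l = (l1, l2)" by (cases l)
    define y1 where "y1 = u1 - l1 - x1"
    define y2 where "y2 = u2 - l2 - x2"
    have X: "2 dvd (x1 - a)" "2 dvd (x2 - b)" "-a \<le> x1" "-b \<le> x2" "x1 + x2 \<le> b + a - 2"
      using x unfolding xx JI_iff by auto
    have Y: "2 dvd (y1 - c)" "2 dvd (y2 - d)" "-c \<le> y1" "-d \<le> y2" "y1 + y2 \<le> d + c - 2"
      using y unfolding uu xx ll pair_diff3 JI_iff y1_def y2_def by auto
    have L: "(l1 = 0 \<and> l2 = 0) \<or> (l1 = 0 \<and> l2 = 2) \<or> (l1 = 2 \<and> l2 = 0)" using Lam_cases[OF l] ll by auto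
    have L2: "2 dvd l1" "2 dvd l2" "0 \<le> l1" "0 \<le> l2" "l1 + l2 \<le> 2" using L by auto
    have e1: "u1 - (a + c) = (x1 - a) + (y1 - c) + l1" by (simp add: y1_def)
    have e2: "u2 - (b + d) = (x2 - b) + (y2 - d) + l2" by (simp add: y2_def)
    have p1: "2 dvd (u1 - (a + c))" unfolding e1 using X(1) Y(1) L2(1) by simp
    have p2: "2 dvd (u2 - (b + d))" unfolding e2 using X(2) Y(2) L2(2) by simp
    have bnd: "-(a+c) \<le> u1" "-(b+d) \<le> u2" "u1 + u2 \<le> (b + d) + (a + c) - 2"
      using X Y L2 unfolding y1_def y2_def by linarith+
    have "lf u \<ge> 0"
    proof (rule ccontr)
      assume neg: "\<not> lf u \<ge> 0"
      then have neg': "lf u < 0" by simp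
      have t: "x = xmin \<and> l = (0,0) \<and> u - l - x = ymin" using tri[OF x l y neg'] .
      have uq: "x' = xmin \<and> l' = (0,0)" if "x' \<in> JI a b" "l' \<in> Lam" "u - l' - x' \<in> JI c d" for x' l'
        using tri[OF that neg'] by simp
      have H: "conv (conv FA FC) (ind Lam) u = FA xmin * FC (u - (0,0) - xmin)"
        by (rule H_single[OF fA fC sA sC _ uq]) (auto simp: Lam_def)
      have t1: "x = xmin" and t2: "l = (0,0)" and t3: "u - l - x = ymin" using t by auto
      have t4: "u - (0,0) - xmin = ymin" using t3 unfolding t1 t2 .
      then have "conv (conv FA FC) (ind Lam) u = 1" using H eA eC xmin_ext ymin_ext by simp
      moreover have "u = u0" using pair_eq_sum[OF t4] u0_sum by simp
      then have "FD u = 1" using eD u0_ext by simp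
      ultimately show False using u by simp
    qed
    then show ?thesis unfolding uu JI_iff using p1 p2 bnd lfu by simp
  next
    case False
    then have H: "conv (conv FA FC) (ind Lam) u = 0"
      by (intro H_zero[OF fA fC sA sC]) auto
    then have "FD u \<noteq> 0" using u by simp
    then have uD: "u \<in> JI (c - a) (d - b)" using sD by (auto simp: supp_def)
    have D: "2 dvd (u1 - (c - a))" "2 dvd (u2 - (d - b))" "-(c - a) \<le> u1" "-(d - b) \<le> u2"
        "u1 + u2 \<le> (d - b) + (c - a) - 2"
      using uD unfolding uu JI_iff by auto
    have e1: "u1 - (a + c) = (u1 - (c - a)) - 2 * a" by simp
    have e2: "u2 - (b + d) = (u2 - (d - b)) - 2 * b" by simp
    have p1: "2 dvd (u1 - (a + c))" unfolding e1 by (rule dvd_diff[OF D(1)]) simp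
    have p2: "2 dvd (u2 - (b + d))" unfolding e2 by (rule dvd_diff[OF D(2)]) simp
    have bnd: "-(a+c) \<le> u1" "-(b+d) \<le> u2" "u1 + u2 \<le> (b + d) + (a + c) - 2"
      using D a0 b0 by linarith+
    have "lf u \<ge> 0"
    proof (rule ccontr)
      assume neg: "\<not> lf u \<ge> 0"
      have LD: "lf u \<ge> -2" "even (lf u)" "lf u = -2 \<longrightarrow> u = u0" using lf_D[OF uD] by auto
      have "lf u \<noteq> -1" using LD(2) by auto
      then have "lf u = -2" using LD(1) neg by linarith
      then have "u = u0" using LD(3) by simp
      then have "u - (0,0) - xmin = ymin" using u0_sum by (cases xmin, cases ymin) simp
      moreover have "(0::int,0::int) \<in> Lam" by (simp add: Lam_def)
      ultimately have "\<exists>x\<in>JI a b. \<exists>l\<in>Lam. u - l - x \<in> JI c d"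
        using xmin_J ymin_J by metis
      then show False using False by blast
    qed
    then show ?thesis unfolding uu JI_iff using p1 p2 bnd lfu by simp
  qed
qed

lemma corner_gen:
  fixes FA FC FD :: "int \<times> int \<Rightarrow> int"
  assumes sA: "supp FA \<subseteq> JI a b" and eA: "\<forall>x\<in>extremal sA. FA x = 1"
    and sC: "supp FC \<subseteq> JI c d" and eC: "\<forall>x\<in>extremal sC. FC x = 1"
    and sD: "supp FD \<subseteq> JI (c - a) (d - b)"
    and l0: "l0 \<in> Lam" and x0: "x0 \<in> extremal sA" and y0: "k - l0 - x0 \<in> extremal sC"
    and kD: "k \<notin> JI (c - a) (d - b)"
    and uq: "\<And>x l. x \<in> JI a b \<Longrightarrow> l \<in> Lam \<Longrightarrow> k - l - x \<in> JI c d \<Longrightarrow> x = x0 \<and> l = l0"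
  shows "conv (conv FA FC) (ind Lam) k - FD k = 1"
proof -
  have fA: "finite (JI a b)" and fC: "finite (JI c d)" by (simp_all add: finite_JI)
  have "conv (conv FA FC) (ind Lam) k = FA x0 * FC (k - l0 - x0)"
    by (rule H_single[OF fA fC sA sC l0 uq])
  also have "\<dots> = 1" using eA eC x0 y0 by simp
  finally have H: "conv (conv FA FC) (ind Lam) k = 1" .
  have "FD k = 0" using sD kD by (auto simp: supp_def)
  then show ?thesis using H by simp
qed

lemma b0_facts: "b = 0 \<Longrightarrow> a = 1 \<and> d = 1"
proof -
  assume "b = 0"
  then have "a * d = 1 \<or> a * d = -1" using det by simp
  then show "a = 1 \<and> d = 1" using a0 d0 int_unit_prod[of a d] by auto
qed

lemma a0_facts: "a = 0 \<Longrightarrow> b = 1 \<and> c = 1"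
proof -
  assume "a = 0"
  then have "b * c = 1 \<or> b * c = -1" using det by auto
  then show "b = 1 \<and> c = 1" using b0 c0 int_unit_prod[of b c] by auto
qed

lemma d_pos: "d > 0"
proof (rule ccontr)
  assume "\<not> d > 0" then have "d = 0" "b = 0" using d0 bd b0 by auto
  then show False using det by simp
qed

lemma c_pos: "c > 0"
proof (rule ccontr)
  assume "\<not> c > 0" then have "c = 0" "a = 0" using c0 ac a0 by auto
  then show False using det by simp
qed

lemma comb_ext:
  fixes FA FC FD :: "int \<times> int \<Rightarrow> int"
  assumes sA: "supp FA \<subseteq> JI a b" and eA: "\<forall>x\<in>extremal sA. FA x = 1"
    and sC: "supp FC \<subseteq> JI c d" and eC: "\<forall>x\<in>extremal sC. FC x = 1"
    and sD: "supp FD \<subseteq> JI (c - a) (d - b)"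
    and k: "k \<in> extremal ss"
  shows "conv (conv FA FC) (ind Lam) k - FD k = 1"
proof -
  note G = corner_gen[OF sA eA sC eC sD]
  have ab1: "a + b \<ge> 1" "c + d \<ge> 1" using sizes_pos by auto
  have bb: "b * (b - 1) \<ge> 0" using b0 by (cases "b = 0") (simp_all)
  have aa: "a * (a - 1) \<ge> 0" using a0 by (cases "a = 0") (simp_all)
  have dd: "d * (d - 1) \<ge> 0" using d0 by (cases "d = 0") (simp_all)
  have cc: "c * (c - 1) \<ge> 0" using c0 by (cases "c = 0") (simp_all)
  consider "k = (a + c, -(b + d))" | "k = (a + c + 2*(b+d) - 2, -(b + d))"
    | "k = (-(a + c), b + d)" | "k = (-(a + c), b + d + 2*(a+c) - 2)"
    using k ext_ss by auto
  then show ?thesis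
  proof cases
    case 1
    show ?thesis
    proof (cases "b = 0")
      case True
      have ad: "a = 1" "d = 1" using b0_facts[OF True] by auto
      show ?thesis
      proof (rule G[of "(2,0)" "(-a, b)"])
        show "(2::int, 0::int) \<in> Lam" by (simp add: Lam_def)
        show "(-a, b) \<in> extremal sA"
          by (rule ext_intro) (unfold JsA PQ_A, simp_all add: JI_iff ad True)
        show "k - (2, 0) - (-a, b) \<in> extremal sC"
          by (rule ext_intro) (unfold JsC PQ_C, simp_all add: JI_iff ad True 1 c0 d0)
        show "k \<notin> JI (c - a) (d - b)" by (simp add: 1 JI_iff ad True)
        fix x l assume "x \<in> JI a b" "l \<in> Lam" "k - l - x \<in> JI c d"
        then show "x = (-a, b) \<and> l = (2, 0)"
          using cornerP0[OF a0 b0 c0 d0 det bd] True 1 by auto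
      qed
    next
      case False
      then have b1: "b \<ge> 1" using b0 by simp
      show ?thesis
      proof (rule G[of "(0,0)" "(a, -b)"])
        show "(0::int, 0::int) \<in> Lam" by (simp add: Lam_def)
        show "(a, -b) \<in> extremal sA"
          by (rule ext_intro) (use b1 a0 in \<open>simp_all add: JsA PQ_A JI_iff\<close>)
        show "k - (0, 0) - (a, -b) \<in> extremal sC"
          by (rule ext_intro) (use d_pos c0 in \<open>simp_all add: JsC PQ_C JI_iff 1\<close>)
        show "k \<notin> JI (c - a) (d - b)" using b1 by (simp add: 1 JI_iff)
        fix x l assume "x \<in> JI a b" "l \<in> Lam" "k - l - x \<in> JI c d"
        then show "x = (a, -b) \<and> l = (0, 0)"
          using cornerP0[OF a0 b0 c0 d0 det bd] False 1 by auto
      qed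
    qed
  next
    case 2
    show ?thesis
    proof (rule G[of "(2,0)" "(a + 2*b - 2, -b)"])
      show "(2::int, 0::int) \<in> Lam" by (simp add: Lam_def)
      show "(a + 2*b - 2, -b) \<in> extremal sA"
      proof (rule ext_intro)
        show "(a + 2*b - 2, -b) \<in> Jset sA"
          unfolding JsA JI_iff using ab1 bb by (simp add: algebra_simps)
        show "(a + 2*b - 2, -b) = Ppt sA 0 \<or> (a + 2*b - 2, -b) = Ppt sA (int (snd sA) - 1) \<or>
          (a + 2*b - 2, -b) = Qpt sA 0 \<or> (a + 2*b - 2, -b) = Qpt sA (int (fst sA) - 1)"
          unfolding PQ_A by (simp add: algebra_simps)
      qed
      have y: "k - (2, 0) - (a + 2*b - 2, -b) = (c + 2*d - 2, -d)" by (simp add: 2 algebra_simps)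
      show "k - (2, 0) - (a + 2*b - 2, -b) \<in> extremal sC"
        unfolding y
      proof (rule ext_intro)
        show "(c + 2*d - 2, -d) \<in> Jset sC"
          unfolding JsC JI_iff using ab1 dd by (simp add: algebra_simps)
        show "(c + 2*d - 2, -d) = Ppt sC 0 \<or> (c + 2*d - 2, -d) = Ppt sC (int (snd sC) - 1) \<or>
          (c + 2*d - 2, -d) = Qpt sC 0 \<or> (c + 2*d - 2, -d) = Qpt sC (int (fst sC) - 1)"
          unfolding PQ_C by (simp add: algebra_simps)
      qed
      show "k \<notin> JI (c - a) (d - b)"
      proof (cases "b = 0")
        case True then show ?thesis using b0_facts[OF True] by (simp add: 2 JI_iff)
      next
        case False then show ?thesis using b0 by (simp add: 2 JI_iff)
      qed
      fix x l assume "x \<in> JI a b" "l \<in> Lam" "k - l - x \<in> JI c d"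
      then show "x = (a + 2*b - 2, -b) \<and> l = (2, 0)"
        using cornerP1[OF a0 b0 c0 d0] 2 by auto
    qed
  next
    case 3
    show ?thesis
    proof (cases "a = 0")
      case True
      have bc: "b = 1" "c = 1" using a0_facts[OF True] by auto
      show ?thesis
      proof (rule G[of "(0,2)" "(a, -b)"])
        show "(0::int, 2::int) \<in> Lam" by (simp add: Lam_def)
        show "(a, -b) \<in> extremal sA"
          by (rule ext_intro) (unfold JsA PQ_A, simp_all add: JI_iff bc True)
        show "k - (0, 2) - (a, -b) \<in> extremal sC"
          by (rule ext_intro) (unfold JsC PQ_C, simp_all add: JI_iff bc True 3 c0 d0)
        show "k \<notin> JI (c - a) (d - b)" by (simp add: 3 JI_iff bc True)
        fix x l assume "x \<in> JI a b" "l \<in> Lam" "k - l - x \<in> JI c d"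
        then show "x = (a, -b) \<and> l = (0, 2)"
          using cornerQ0[OF a0 b0 c0 d0 det ac] True 3 by auto
      qed
    next
      case False
      then have a1: "a \<ge> 1" using a0 by simp
      show ?thesis
      proof (rule G[of "(0,0)" "(-a, b)"])
        show "(0::int, 0::int) \<in> Lam" by (simp add: Lam_def)
        show "(-a, b) \<in> extremal sA"
          by (rule ext_intro) (use a1 b0 in \<open>simp_all add: JsA PQ_A JI_iff\<close>)
        show "k - (0, 0) - (-a, b) \<in> extremal sC"
          by (rule ext_intro) (use c_pos d0 in \<open>simp_all add: JsC PQ_C JI_iff 3\<close>)
        show "k \<notin> JI (c - a) (d - b)" using a1 by (simp add: 3 JI_iff)
        fix x l assume "x \<in> JI a b" "l \<in> Lam" "k - l - x \<in> JI c d"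
        then show "x = (-a, b) \<and> l = (0, 0)"
          using cornerQ0[OF a0 b0 c0 d0 det ac] False 3 by auto
      qed
    qed
  next
    case 4
    show ?thesis
    proof (rule G[of "(0,2)" "(-a, b + 2*a - 2)"])
      show "(0::int, 2::int) \<in> Lam" by (simp add: Lam_def)
      show "(-a, b + 2*a - 2) \<in> extremal sA"
      proof (rule ext_intro)
        show "(-a, b + 2*a - 2) \<in> Jset sA"
          unfolding JsA JI_iff using ab1 aa by (simp add: algebra_simps)
        show "(-a, b + 2*a - 2) = Ppt sA 0 \<or> (-a, b + 2*a - 2) = Ppt sA (int (snd sA) - 1) \<or>
          (-a, b + 2*a - 2) = Qpt sA 0 \<or> (-a, b + 2*a - 2) = Qpt sA (int (fst sA) - 1)"
          unfolding PQ_A by (simp add: algebra_simps)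
      qed
      have y: "k - (0, 2) - (-a, b + 2*a - 2) = (-c, d + 2*c - 2)" by (simp add: 4 algebra_simps)
      show "k - (0, 2) - (-a, b + 2*a - 2) \<in> extremal sC"
        unfolding y
      proof (rule ext_intro)
        show "(-c, d + 2*c - 2) \<in> Jset sC"
          unfolding JsC JI_iff using ab1 cc by (simp add: algebra_simps)
        show "(-c, d + 2*c - 2) = Ppt sC 0 \<or> (-c, d + 2*c - 2) = Ppt sC (int (snd sC) - 1) \<or>
          (-c, d + 2*c - 2) = Qpt sC 0 \<or> (-c, d + 2*c - 2) = Qpt sC (int (fst sC) - 1)"
          unfolding PQ_C by (simp add: algebra_simps)
      qed
      show "k \<notin> JI (c - a) (d - b)"
      proof (cases "a = 0")
        case True then show ?thesis using a0_facts[OF True] by (simp add: 4 JI_iff)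
      next
        case False then show ?thesis using a0 by (simp add: 4 JI_iff)
      qed
      fix x l assume "x \<in> JI a b" "l \<in> Lam" "k - l - x \<in> JI c d"
      then show "x = (-a, b + 2*a - 2) \<and> l = (0, 2)"
        using cornerQ1[OF a0 b0 c0 d0] 4 by auto
    qed
  qed
qed

end


lemma Ffun_base:
  assumes "s = (0,1) \<or> s = (1,1) \<or> s = (1,0)"
  shows "Ffun s = ind (Jset s)"
  by (subst Ffun.simps, subst if_P[OF assms]) (rule refl)

lemma main:
  "inQ s \<Longrightarrow> supp (Ffun s) \<subseteq> Jset s \<and> (\<forall>c\<in>extremal s. Ffun s c = 1)"
proof (induction s rule: measure_induct_rule[of qsize])
  case (less s)
  show ?case
  proof (cases "s = (0,1) \<or> s = (1,1) \<or> s = (1,0)")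
    case True
    have F: "Ffun s = ind (Jset s)" by (rule Ffun_base[OF True])
    have s1: "supp (Ffun s) \<subseteq> Jset s" unfolding F by (auto simp: supp_def ind_def)
    have "extremal s \<subseteq> Jset s"
    proof (cases "s = (1,1)")
      case True
      then show ?thesis by (auto simp: extremal_def Ppt_def Qpt_def Jset_def)
    next
      case False
      then have "s = (0,1) \<or> s = (1,0)" using \<open>s = (0,1) \<or> s = (1,1) \<or> s = (1,0)\<close> by blast
      then show ?thesis by (simp add: extremal_def)
    qed
    then have "\<forall>c\<in>extremal s. Ffun s c = 1" unfolding F by (auto simp: ind_def)
    then show ?thesis using s1 by blast
  next
    case False
    then have nb: "s \<noteq> (0,1)" "s \<noteq> (1,0)" "s \<noteq> (1,1)" by auto
    obtain a b c d where f: "fpair a b c d" "fpair.ss a b c d = s" "a + b < c + d" "a \<le> c" "b \<le> d"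
      using farey_exists[OF less.prems nb] by blast
    interpret fpair a b c d by (rule f(1))
    have n11: "\<not> (a + c = 1 \<and> b + d = 1)"
    proof
      assume "a + c = 1 \<and> b + d = 1"
      then have "ss = (1,1)" by (simp add: ss_def)
      then show False using f(2) nb(3) by simp
    qed
    interpret fpo a b c d by unfold_locales (use f n11 in auto)
    have IA: "supp (Ffun sA) \<subseteq> Jset sA \<and> (\<forall>c\<in>extremal sA. Ffun sA c = 1)"
    proof (rule less.IH)
      show "qsize sA < qsize s" using f(2) sizes_pos a0 b0 c0 d0
        by (auto simp: qsize_def sA_def ss_def)
      show "inQ sA" by (rule inQ_A)
    qed
    have IC: "supp (Ffun sC) \<subseteq> Jset sC \<and> (\<forall>c\<in>extremal sC. Ffun sC c = 1)"
    proof (rule less.IH)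
      show "qsize sC < qsize s" using f(2) sizes_pos a0 b0 c0 d0
        by (auto simp: qsize_def sC_def ss_def)
      show "inQ sC" by (rule inQ_C)
    qed
    have ID: "supp (Ffun sD) \<subseteq> Jset sD \<and> (\<forall>c\<in>extremal sD. Ffun sD c = 1)"
    proof (rule less.IH)
      show "qsize sD < qsize s" using f(2) sizes_pos a0 b0 c0 d0 ac bd
        by (auto simp: qsize_def sD_def ss_def)
      show "inQ sD" by (rule inQ_D)
    qed
    have sA': "supp (Ffun sA) \<subseteq> JI a b" using IA JsA by simp
    have sC': "supp (Ffun sC) \<subseteq> JI c d" using IC JsC by simp
    have sD': "supp (Ffun sD) \<subseteq> JI (c - a) (d - b)" using ID JsD by simp
    have FF: "Ffun s = (\<lambda>u. conv (conv (Ffun sA) (Ffun sC)) (ind Lam) u - Ffun sD u)"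
      using Ffun_ss f(2) by simp
    have S: "supp (Ffun s) \<subseteq> Jset s"
    proof
      fix u assume "u \<in> supp (Ffun s)"
      then have "conv (conv (Ffun sA) (Ffun sC)) (ind Lam) u - Ffun sD u \<noteq> 0"
        unfolding FF supp_def by simp
      moreover have "\<forall>c\<in>extremal sA. Ffun sA c = 1" "\<forall>c\<in>extremal sC. Ffun sC c = 1"
        "\<forall>c\<in>extremal sD. Ffun sD c = 1" using IA IC ID by auto
      ultimately have "u \<in> JI (a + c) (b + d)"
        using comb_supp[OF sA' _ sC' _ sD'] by blast
      then show "u \<in> Jset s" using Jss f(2) by simp
    qed
    have E: "\<forall>k\<in>extremal s. Ffun s k = 1"
    proof
      fix k assume "k \<in> extremal s"
      then have k: "k \<in> extremal ss" using f(2) by simp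
      show "Ffun s k = 1"
        unfolding FF using comb_ext[OF sA' _ sC' _ sD' k] IA IC by simp
    qed
    show ?thesis using S E by blast
  qed
qed

theorem lemma8:
  fixes s :: "nat \<times> nat"
  assumes "inQ s"
  shows "{c. Ffun s c \<noteq> 0} \<subseteq> Jset s \<and> (\<forall>c\<in>extremal s. Ffun s c = 1)"
  using main[OF assms] unfolding supp_def .


end
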